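(* Suppose the chain is $\varrho$-metastable w.r.t. $\mathcal M=\{M_1,\dots,M_K\}$, $K\ge2$, and let $(\mathcal S_i)$ be a metastable partition. Let $M_i\in\mathcal M$, let $\mathcal B\subset\mathcal M\setminus\{M_i\}$ be nonempty with index set $I_{\mathcal B}$, and $B=\bigcup_{M\in\mathcal B}M$. Then for every $\delta\in(0,1/2)$, $$1-2\delta\le\frac{\mathrm{cap}(M_i,B)}{\mathrm{cap}\bigl(\mathcal U_{M_i}(\delta,B),\mathcal U_B(\delta,M_i)\bigr)}\le1,$$ and the set $X=\mathcal S_i\setminus\mathcal U_{M_i}(\delta,B)$ satisfies $\mu[X]\le\varrho\,\delta^{-1}\mu[M_i]$.
   Context: Setting: $\mathcal S$ countable; $(X(t))_{t\in\mathbb N_0}$ irreducible positive recurrent discrete-time Markov chain reversible w.r.t. its invariant probability measure $\mu$; $\mathbb P_\nu$ law started from $\nu$; $\tau_A=\inf\{t>0:X(t)\in A\}$; $\mu_A=\mu[\cdot\mid A]$. Equilibrium potential $h_{A,B}$: $1$ on $A$, $0$ on $B$, $\mathbb P_x[\tau_A<\tau_B]$ elsewhere; $\mathrm{cap}(A,B)=\sum_{x\in A}\mu(x)\mathbb P_x[\tau_B<\tau_A]$. Metastability: $\mathcal M=\{M_1,\dots,M_K\}$ nonempty pairwise disjoint, $\mathbf M=\bigcup_jM_j$; $p_{\mathrm{esc}}:=\max_{M\in\mathcal M}\mathbb P_{\mu_M}[\tau_{\mathbf M\setminus M}<\tau_M]$; $\varrho$-metastable means $|\mathcal M|\,p_{\mathrm{esc}}\le\varrho\min_{\emptyset\ne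 A\subset\mathcal S\setminus\mathbf M}\mathbb P_{\mu_A}[\tau_{\mathbf M}<\tau_A]$. Local valley $\mathcal V_i=\{x:\mathbb P_x[\tau_{M_i}<\tau_{\mathbf M\setminus M_i}]\ge\max_{j\ne i}\mathbb P_x[\tau_{M_j}<\tau_{\mathbf M\setminus M_j}]\}$; metastable partition: $\mathcal S=\biguplus_i\mathcal S_i$, $\mathcal S_i\subset\mathcal V_i$, $M_i\subset\mathcal S_i$. Harmonic neighbourhood: for disjoint nonempty subcollections $\mathcal A,\mathcal B\subset\mathcal M$ with index sets $I_{\mathcal A},I_{\mathcal B}$, $A=\bigcup_{M\in\mathcal A}M$, $B=\bigcup_{M\in\mathcal B}M$ and $\delta\in(0,1)$: $\mathcal U_A(\delta,B)=\{x\in\bigcup_{i\in I_{\mathcal A}}\mathcal S_i: h_{A,B}(x)\ge1-\delta\}$. *)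

theory Defs
  imports "HOL-Analysis.Analysis"
begin

text \<open>Discrete-time Markov chain on a countable state space 's, given by its
transition matrix P. Hitting probabilities are defined by summing over paths.
hit_n P A B n x is the probability, starting from x, that tau_A = n+1 and
tau_B > n+1, where tau_C = inf{t > 0. X(t) in C}.\<close>

fun hit_n :: "('s \<Rightarrow> 's \<Rightarrow> real) \<Rightarrow> 's set \<Rightarrow> 's set \<Rightarrow> nat \<Rightarrow> 's \<Rightarrow> real" where
  "hit_n P A B 0 x = (\<Sum>\<^sub>\<infinity>y\<in>A - B. P x y)"
| "hit_n P A B (Suc n) x = (\<Sum>\<^sub>\<infinity>y\<in>- (A \<union> B). P x y * hit_n P A B n y)"

text \<open>hitprob P A B x = P_x[tau_A < tau_B].\<close>
definition hitprob :: "('s \<Rightarrow> 's \<Rightarrow> real) \<Rightarrow> 's set \<Rightarrow> 's set \<Rightarrow> 's \<Rightarrow> real" where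
  "hitprob P A B x = (\<Sum>n. hit_n P A B n x)"

definition stochastic :: "('s \<Rightarrow> 's \<Rightarrow> real) \<Rightarrow> bool" where
  "stochastic P \<longleftrightarrow> (\<forall>x y. 0 \<le> P x y) \<and> (\<forall>x. (P x has_sum 1) UNIV)"

definition irreducible_chain :: "('s \<Rightarrow> 's \<Rightarrow> real) \<Rightarrow> bool" where
  "irreducible_chain P \<longleftrightarrow> (\<forall>x y. (x, y) \<in> {(a, b). 0 < P a b}\<^sup>*)"

text \<open>Positive recurrence: every state is recurrent (P_x[tau_x < infinity] = 1)
and has finite mean return time E_x[tau_x].\<close>
definition positive_recurrent :: "('s \<Rightarrow> 's \<Rightarrow> real) \<Rightarrow> bool" where
  "positive_recurrent P \<longleftrightarrow>
     (\<forall>x. hitprob P {x} {} x = 1 \<and> summable (\<lambda>n. real (Suc n) * hit_n P {x} {} n x))"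

definition invariant_prob :: "('s \<Rightarrow> 's \<Rightarrow> real) \<Rightarrow> ('s \<Rightarrow> real) \<Rightarrow> bool" where
  "invariant_prob P \<mu> \<longleftrightarrow> (\<forall>x. 0 \<le> \<mu> x) \<and> (\<mu> has_sum 1) UNIV \<and>
     (\<forall>y. ((\<lambda>x. \<mu> x * P x y) has_sum \<mu> y) UNIV)"

definition reversible :: "('s \<Rightarrow> 's \<Rightarrow> real) \<Rightarrow> ('s \<Rightarrow> real) \<Rightarrow> bool" where
  "reversible P \<mu> \<longleftrightarrow> (\<forall>x y. \<mu> x * P x y = \<mu> y * P y x)"

definition rev_pos_rec_chain :: "('s::countable \<Rightarrow> 's \<Rightarrow> real) \<Rightarrow> ('s \<Rightarrow> real) \<Rightarrow> bool" where
  "rev_pos_rec_chain P \<mu> \<longleftrightarrow> stochastic P \<and> irreducible_chain P \<and> positive_recurrent P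
     \<and> invariant_prob P \<mu> \<and> reversible P \<mu>"

definition meas :: "('s \<Rightarrow> real) \<Rightarrow> 's set \<Rightarrow> real" where
  "meas \<mu> A = (\<Sum>\<^sub>\<infinity>x\<in>A. \<mu> x)"

definition hitprob_cond :: "('s \<Rightarrow> 's \<Rightarrow> real) \<Rightarrow> ('s \<Rightarrow> real) \<Rightarrow> 's set \<Rightarrow> 's set \<Rightarrow> 's set \<Rightarrow> real" where
  "hitprob_cond P \<mu> A C D = (\<Sum>\<^sub>\<infinity>x\<in>A. \<mu> x * hitprob P C D x) / meas \<mu> A"

definition eq_pot :: "('s \<Rightarrow> 's \<Rightarrow> real) \<Rightarrow> 's set \<Rightarrow> 's set \<Rightarrow> 's \<Rightarrow> real" where
  "eq_pot P A B x = (if x \<in> A then 1 else if x \<in> B then 0 else hitprob P A B x)"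

definition cap :: "('s \<Rightarrow> 's \<Rightarrow> real) \<Rightarrow> ('s \<Rightarrow> real) \<Rightarrow> 's set \<Rightarrow> 's set \<Rightarrow> real" where
  "cap P \<mu> A B = (\<Sum>\<^sub>\<infinity>x\<in>A. \<mu> x * hitprob P B A x)"

definition Mbig :: "(nat \<Rightarrow> 's set) \<Rightarrow> nat \<Rightarrow> 's set" where
  "Mbig M K = (\<Union>i<K. M i)"

definition p_esc :: "('s \<Rightarrow> 's \<Rightarrow> real) \<Rightarrow> ('s \<Rightarrow> real) \<Rightarrow> (nat \<Rightarrow> 's set) \<Rightarrow> nat \<Rightarrow> real" where
  "p_esc P \<mu> M K = Max ((\<lambda>i. hitprob_cond P \<mu> (M i) (Mbig M K - M i) (M i)) ` {..<K})"

definition metastable :: "('s \<Rightarrow> 's \<Rightarrow> real) \<Rightarrow> ('s \<Rightarrow> real) \<Rightarrow> real \<Rightarrow> (nat \<Rightarrow> 's set) \<Rightarrow> nat \<Rightarrow> bool" where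
  "metastable P \<mu> \<rho> M K \<longleftrightarrow>
     (\<forall>i<K. M i \<noteq> {}) \<and> (\<forall>i<K. \<forall>j<K. i \<noteq> j \<longrightarrow> M i \<inter> M j = {}) \<and>
     (\<forall>A. A \<noteq> {} \<and> A \<subseteq> - Mbig M K \<longrightarrow>
        real K * p_esc P \<mu> M K \<le> \<rho> * hitprob_cond P \<mu> A (Mbig M K) A)"

definition local_valley :: "('s \<Rightarrow> 's \<Rightarrow> real) \<Rightarrow> (nat \<Rightarrow> 's set) \<Rightarrow> nat \<Rightarrow> nat \<Rightarrow> 's set" where
  "local_valley P M K i = {x. \<forall>j<K. j \<noteq> i \<longrightarrow>
      hitprob P (M j) (Mbig M K - M j) x \<le> hitprob P (M i) (Mbig M K - M i) x}"

definition metastable_partition ::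
  "('s \<Rightarrow> 's \<Rightarrow> real) \<Rightarrow> (nat \<Rightarrow> 's set) \<Rightarrow> nat \<Rightarrow> (nat \<Rightarrow> 's set) \<Rightarrow> bool" where
  "metastable_partition P M K S \<longleftrightarrow>
     (\<Union>i<K. S i) = UNIV \<and> (\<forall>i<K. \<forall>j<K. i \<noteq> j \<longrightarrow> S i \<inter> S j = {}) \<and>
     (\<forall>i<K. S i \<subseteq> local_valley P M K i \<and> M i \<subseteq> S i)"

definition harm_nbhd ::
  "('s \<Rightarrow> 's \<Rightarrow> real) \<Rightarrow> (nat \<Rightarrow> 's set) \<Rightarrow> (nat \<Rightarrow> 's set) \<Rightarrow> nat set \<Rightarrow> real \<Rightarrow> nat set \<Rightarrow> 's set" where
  "harm_nbhd P M S IA \<delta> IB =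
     {x \<in> (\<Union>i\<in>IA. S i). 1 - \<delta> \<le> eq_pot P (\<Union>i\<in>IA. M i) (\<Union>j\<in>IB. M j) x}"

end

theory Submission
  imports Defs
begin

lemma infsum_diff_real:
  fixes f g :: "'a \<Rightarrow> real"
  assumes "f summable_on A" "g summable_on A"
  shows "(\<Sum>\<^sub>\<infinity>x\<in>A. f x - g x) = infsum f A - infsum g A"
proof -
  have "(\<lambda>x. - g x) summable_on A" using assms(2) by (simp add: summable_on_uminus)
  from infsum_add[OF assms(1) this] show ?thesis by (simp add: infsum_uminus)
qed

lemma summable_on_diff_real:
  fixes f g :: "'a \<Rightarrow> real"
  assumes "f summable_on A" "g summable_on A"
  shows "(\<lambda>x. f x - g x) summable_on A"
proof -
  have "(\<lambda>x. - g x) summable_on A" using assms(2) by (simp add: summable_on_uminus)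
  from summable_on_add[OF assms(1) this] show ?thesis by simp
qed

lemma weighted_summable:
  fixes w f :: "'a \<Rightarrow> real"
  assumes "w summable_on A" "\<And>x. x \<in> A \<Longrightarrow> 0 \<le> w x" "\<And>x. x \<in> A \<Longrightarrow> \<bar>f x\<bar> \<le> c"
  shows "(\<lambda>x. w x * f x) summable_on A"
proof -
  have "(\<lambda>x. \<bar>c\<bar> * w x) summable_on A" using assms(1) by (rule summable_on_cmult_right)
  then have "(\<lambda>x. norm (\<bar>c\<bar> * w x)) summable_on A"
    by (rule summable_on_iff_abs_summable_on_real[THEN iffD1])
  then have "(\<lambda>x. norm (w x * f x)) summable_on A"
  proof (rule Infinite_Sum.abs_summable_on_comparison_test)
    fix x assume x: "x \<in> A"
    have "\<bar>w x * f x\<bar> = w x * \<bar>f x\<bar>" using assms(2)[OF x] by (simp add: abs_mult)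
    also have "\<dots> \<le> w x * \<bar>c\<bar>" using assms(2)[OF x] assms(3)[OF x]
      by (intro mult_left_mono) auto
    finally show "norm (w x * f x) \<le> norm (\<bar>c\<bar> * w x)" using assms(2)[OF x] by (simp add: abs_mult mult.commute)
  qed
  then show ?thesis by (rule summable_on_iff_abs_summable_on_real[THEN iffD2])
qed

definition bnd :: "('a \<Rightarrow> real) \<Rightarrow> bool" where
  "bnd f \<longleftrightarrow> (\<exists>c. \<forall>x. \<bar>f x\<bar> \<le> c)"

lemma bndI: "(\<And>x. \<bar>f x\<bar> \<le> c) \<Longrightarrow> bnd f" unfolding bnd_def by blast
lemma bndE: assumes "bnd f" obtains c where "\<And>x. \<bar>f x\<bar> \<le> c" using assms unfolding bnd_def by blast

lemma bnd_add: assumes "bnd f" "bnd g" shows "bnd (\<lambda>x. f x + g x)"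
proof -
  obtain c d where c: "\<And>x. \<bar>f x\<bar> \<le> c" and d: "\<And>x. \<bar>g x\<bar> \<le> d" using assms by (metis bndE)
  have "\<bar>f x + g x\<bar> \<le> c + d" for x using c[of x] d[of x] by linarith
  then show ?thesis by (rule bndI)
qed
lemma bnd_diff: assumes "bnd f" "bnd g" shows "bnd (\<lambda>x. f x - g x)"
proof -
  obtain c d where c: "\<And>x. \<bar>f x\<bar> \<le> c" and d: "\<And>x. \<bar>g x\<bar> \<le> d" using assms by (metis bndE)
  have "\<bar>f x - g x\<bar> \<le> c + d" for x using c[of x] d[of x] by linarith
  then show ?thesis by (rule bndI)
qed
lemma bnd_mult: assumes "bnd f" "bnd g" shows "bnd (\<lambda>x. f x * g x)"
proof -
  obtain c d where c: "\<And>x. \<bar>f x\<bar> \<le> c" and d: "\<And>x. \<bar>g x\<bar> \<le> d" using assms by (metis bndE)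
  have "\<bar>f x * g x\<bar> \<le> c * d" for x
  proof -
    have "\<bar>f x * g x\<bar> = \<bar>f x\<bar> * \<bar>g x\<bar>" by (rule abs_mult)
    also have "\<dots> \<le> c * d" by (rule mult_mono[OF c d]) (use c[of x] in auto)
    finally show ?thesis .
  qed
  then show ?thesis by (rule bndI)
qed
lemma bnd_const: "bnd (\<lambda>x. c)" by (rule bndI[of _ "\<bar>c\<bar>"]) simp
lemma bnd_cmult: "bnd f \<Longrightarrow> bnd (\<lambda>x. c * f x)" using bnd_mult[OF bnd_const] by blast
lemma bnd_01: "(\<And>x. 0 \<le> f x \<and> f x \<le> 1) \<Longrightarrow> bnd f" by (rule bndI[of _ 1]) (metis abs_of_nonneg)
lemma bnd_max: "bnd f \<Longrightarrow> bnd (\<lambda>x. max (f x) c)"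
proof (elim bndE)
  fix d assume d: "\<And>x. \<bar>f x\<bar> \<le> d"
  show "bnd (\<lambda>x. max (f x) c)"
  proof (rule bndI[of _ "d + \<bar>c\<bar>"])
    fix x have "0 \<le> d" using d[of x] by linarith
    then show "\<bar>max (f x) c\<bar> \<le> d + \<bar>c\<bar>" using d[of x] by (auto simp: abs_le_iff max_def)
  qed
qed
lemma bnd_neg: "bnd f \<Longrightarrow> bnd (\<lambda>x. - f x)" by (elim bndE, rule bndI) simp

definition Pop :: "('s \<Rightarrow> 's \<Rightarrow> real) \<Rightarrow> ('s \<Rightarrow> real) \<Rightarrow> 's \<Rightarrow> real" where
  "Pop P f x = (\<Sum>\<^sub>\<infinity>y. P x y * f y)"

definition Dform :: "('s \<Rightarrow> 's \<Rightarrow> real) \<Rightarrow> ('s \<Rightarrow> real) \<Rightarrow> ('s \<Rightarrow> real) \<Rightarrow> ('s \<Rightarrow> real) \<Rightarrow> real" where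
  "Dform P \<mu> f g = (\<Sum>\<^sub>\<infinity>x. \<mu> x * (f x * (g x - Pop P g x)))"

lemma infsum_fsum:
  fixes F :: "'j \<Rightarrow> 'a \<Rightarrow> real"
  assumes "finite J" "\<And>j. j \<in> J \<Longrightarrow> F j summable_on A"
  shows "(\<Sum>\<^sub>\<infinity>x\<in>A. \<Sum>j\<in>J. F j x) = (\<Sum>j\<in>J. \<Sum>\<^sub>\<infinity>x\<in>A. F j x)
     \<and> (\<lambda>x. \<Sum>j\<in>J. F j x) summable_on A"
  using assms
proof (induction J rule: finite_induct)
  case empty then show ?case by simp
next
  case (insert a J)
  have IH: "(\<Sum>\<^sub>\<infinity>x\<in>A. \<Sum>j\<in>J. F j x) = (\<Sum>j\<in>J. \<Sum>\<^sub>\<infinity>x\<in>A. F j x)"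
     "(\<lambda>x. \<Sum>j\<in>J. F j x) summable_on A" using insert by auto
  have fa: "F a summable_on A" using insert by auto
  have "(\<Sum>\<^sub>\<infinity>x\<in>A. \<Sum>j\<in>insert a J. F j x) = (\<Sum>\<^sub>\<infinity>x\<in>A. F a x + (\<Sum>j\<in>J. F j x))"
    using insert.hyps by simp
  also have "\<dots> = (\<Sum>\<^sub>\<infinity>x\<in>A. F a x) + (\<Sum>\<^sub>\<infinity>x\<in>A. \<Sum>j\<in>J. F j x)"
    by (rule infsum_add[OF fa IH(2)])
  finally have 1: "(\<Sum>\<^sub>\<infinity>x\<in>A. \<Sum>j\<in>insert a J. F j x) = (\<Sum>j\<in>insert a J. \<Sum>\<^sub>\<infinity>x\<in>A. F j x)"
    using insert.hyps IH(1) by simp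
  have "(\<lambda>x. F a x + (\<Sum>j\<in>J. F j x)) summable_on A" by (rule summable_on_add[OF fa IH(2)])
  then have 2: "(\<lambda>x. \<Sum>j\<in>insert a J. F j x) summable_on A" using insert.hyps by simp
  from 1 2 show ?case ..
qed

lemma abs_prod_bound:
  fixes a b a' b' c d :: real
  assumes "\<bar>a\<bar> \<le> c" "\<bar>b\<bar> \<le> c" "\<bar>a'\<bar> \<le> d" "\<bar>b'\<bar> \<le> d"
  shows "\<bar>(a - b) * (a' - b')\<bar> \<le> (2 * c) * (2 * d)"
proof -
  have 1: "\<bar>a - b\<bar> \<le> 2 * c" using assms(1,2) by linarith
  have 2: "\<bar>a' - b'\<bar> \<le> 2 * d" using assms(3,4) by linarith
  show ?thesis unfolding abs_mult by (rule mult_mono[OF 1 2]) (use assms(1) in auto)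
qed

lemma infsum_4:
  fixes a b c d :: "'a \<Rightarrow> real"
  assumes "a summable_on A" "b summable_on A" "c summable_on A" "d summable_on A"
  shows "(\<Sum>\<^sub>\<infinity>x\<in>A. a x - b x - (c x - d x)) = infsum a A - infsum b A - (infsum c A - infsum d A)"
proof -
  have 1: "(\<lambda>x. a x - b x) summable_on A" "(\<lambda>x. c x - d x) summable_on A"
    using assms summable_on_diff_real by blast+
  show ?thesis using infsum_diff_real[OF 1] infsum_diff_real[OF assms(1,2)] infsum_diff_real[OF assms(3,4)] by simp
qed

locale mchain =
  fixes P :: "'s \<Rightarrow> 's \<Rightarrow> real" and \<mu> :: "'s \<Rightarrow> real"
  assumes stoch: "stochastic P" and irr: "irreducible_chain P"
    and inv: "invariant_prob P \<mu>" and rev: "reversible P \<mu>"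
begin

lemma P_nonneg: "0 \<le> P x y" using stoch unfolding stochastic_def by blast
lemma P_hs: "(P x has_sum 1) UNIV" using stoch unfolding stochastic_def by blast
lemma P_summ: "P x summable_on S"
  using P_hs summable_on_subset_banach has_sum_imp_summable by blast
lemma P_sum1: "(\<Sum>\<^sub>\<infinity>y. P x y) = 1" using P_hs infsumI by blast
lemma P_le1: "(\<Sum>\<^sub>\<infinity>y\<in>S. P x y) \<le> 1"
proof -
  have "(\<Sum>\<^sub>\<infinity>y\<in>S. P x y) \<le> (\<Sum>\<^sub>\<infinity>y. P x y)"
    by (rule infsum_mono_neutral) (auto simp: P_summ P_nonneg)
  then show ?thesis using P_sum1 by simp
qed
lemma P_ge0: "0 \<le> (\<Sum>\<^sub>\<infinity>y\<in>S. P x y)" by (rule infsum_nonneg) (simp add: P_nonneg)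

lemma mu_nonneg: "0 \<le> \<mu> x" using inv unfolding invariant_prob_def by blast
lemma mu_hs: "(\<mu> has_sum 1) UNIV" using inv unfolding invariant_prob_def by blast
lemma mu_summ: "\<mu> summable_on S"
  using mu_hs summable_on_subset_banach has_sum_imp_summable by blast
lemma mu_inv: "((\<lambda>x. \<mu> x * P x y) has_sum \<mu> y) UNIV" using inv unfolding invariant_prob_def by blast
lemma rev': "\<mu> x * P x y = \<mu> y * P y x" using rev unfolding reversible_def by blast

lemma Psumm_bnd: "\<forall>y. \<bar>f y\<bar> \<le> c \<Longrightarrow> (\<lambda>y. P x y * f y) summable_on S"
  by (rule weighted_summable[OF P_summ]) (auto simp: P_nonneg)
lemma Psumm: "bnd f \<Longrightarrow> (\<lambda>y. P x y * f y) summable_on S"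
  by (elim bndE) (rule Psumm_bnd, blast)
lemma musumm: "bnd f \<Longrightarrow> (\<lambda>y. \<mu> y * f y) summable_on S"
  by (elim bndE) (rule weighted_summable[OF mu_summ], auto simp: mu_nonneg)

lemma Pop_bound: assumes "\<And>y. \<bar>f y\<bar> \<le> c" shows "\<bar>Pop P f x\<bar> \<le> c"
proof -
  have s: "(\<lambda>y. P x y * f y) summable_on UNIV" using Psumm_bnd assms by blast
  have s2: "(\<lambda>y. c * P x y) summable_on UNIV" by (intro summable_on_cmult_right P_summ)
  have s3: "(\<lambda>y. - (c * P x y)) summable_on UNIV" using s2 by (simp add: summable_on_uminus)
  have pw: "- (c * P x y) \<le> P x y * f y \<and> P x y * f y \<le> c * P x y" for y
  proof -
    have a: "- c \<le> f y" "f y \<le> c" using assms[of y] by linarith+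
    have "P x y * (- c) \<le> P x y * f y" by (rule mult_left_mono[OF a(1) P_nonneg])
    moreover have "P x y * f y \<le> P x y * c" by (rule mult_left_mono[OF a(2) P_nonneg])
    ultimately show ?thesis by (simp add: mult.commute)
  qed
  have "Pop P f x \<le> (\<Sum>\<^sub>\<infinity>y. c * P x y)" unfolding Pop_def
    by (rule infsum_mono[OF s s2]) (use pw in blast)
  moreover have "(\<Sum>\<^sub>\<infinity>y. - (c * P x y)) \<le> Pop P f x" unfolding Pop_def
    by (rule infsum_mono[OF s3 s]) (use pw in blast)
  moreover have e: "(\<Sum>\<^sub>\<infinity>y. c * P x y) = c" by (simp add: infsum_cmult_right' P_sum1)
  moreover have "(\<Sum>\<^sub>\<infinity>y. - (c * P x y)) = - c" unfolding infsum_uminus e ..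
  ultimately have "Pop P f x \<le> c" "- c \<le> Pop P f x" by simp_all
  then show ?thesis by (simp only: abs_le_iff) simp
qed

lemma bnd_Pop: "bnd f \<Longrightarrow> bnd (Pop P f)"
  by (elim bndE, rule bndI, rule Pop_bound)

lemma Pop_add: "bnd f \<Longrightarrow> bnd g \<Longrightarrow> Pop P (\<lambda>y. f y + g y) x = Pop P f x + Pop P g x"
  unfolding Pop_def by (simp add: distrib_left infsum_add Psumm)
lemma Pop_diff: "bnd f \<Longrightarrow> bnd g \<Longrightarrow> Pop P (\<lambda>y. f y - g y) x = Pop P f x - Pop P g x"
  unfolding Pop_def by (simp add: right_diff_distrib infsum_diff_real Psumm)
lemma Pop_cmult: "Pop P (\<lambda>y. c * f y) x = c * Pop P f x"
  unfolding Pop_def by (simp add: infsum_cmult_right'[symmetric] algebra_simps)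
lemma Pop_const: "Pop P (\<lambda>y. c) x = c"
  unfolding Pop_def by (simp add: infsum_cmult_left' P_sum1)
lemma Pop_mono: "bnd f \<Longrightarrow> bnd g \<Longrightarrow> (\<And>y. f y \<le> g y) \<Longrightarrow> Pop P f x \<le> Pop P g x"
  unfolding Pop_def by (rule infsum_mono) (auto simp: Psumm P_nonneg mult_left_mono)
lemma Pop_sum: "finite J \<Longrightarrow> (\<And>j. j \<in> J \<Longrightarrow> bnd (F j)) \<Longrightarrow>
    Pop P (\<lambda>y. \<Sum>j\<in>J. F j y) x = (\<Sum>j\<in>J. Pop P (F j) x)"
proof (induction J rule: finite_induct)
  case empty then show ?case using Pop_const[of 0] by simp
next
  case (insert a J)
  have b: "bnd (\<lambda>y. \<Sum>j\<in>J. F j y)"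
  proof -
    have "\<forall>j\<in>J. \<exists>c. \<forall>y. \<bar>F j y\<bar> \<le> c" using insert.prems unfolding bnd_def by blast
    then obtain c where c: "\<And>j y. j \<in> J \<Longrightarrow> \<bar>F j y\<bar> \<le> c j" by metis
    show ?thesis by (rule bndI[of _ "\<Sum>j\<in>J. c j"]) (rule order.trans[OF sum_abs], rule sum_mono, rule c)
  qed
  have "Pop P (\<lambda>y. \<Sum>j\<in>insert a J. F j y) x = Pop P (\<lambda>y. F a y + (\<Sum>j\<in>J. F j y)) x"
    using insert.hyps by simp
  also have "\<dots> = Pop P (F a) x + Pop P (\<lambda>y. \<Sum>j\<in>J. F j y) x"
    by (rule Pop_add) (use insert.prems b in auto)
  finally show ?case using insert by simp
qed


lemma Pop_neg: "Pop P (\<lambda>y. - f y) x = - Pop P f x"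
  using Pop_cmult[of "-1" f x] by simp

lemma Pop_nonneg: assumes "bnd f" "\<And>y. 0 \<le> f y" shows "0 \<le> Pop P f x"
proof -
  have "Pop P (\<lambda>_. 0) x \<le> Pop P f x" by (rule Pop_mono) (use assms bnd_const in auto)
  then show ?thesis by (simp add: Pop_const)
qed

lemma mu_step: assumes "0 < \<mu> a" "0 < P a b" shows "0 < \<mu> b"
proof -
  have "(\<Sum>x\<in>{a}. \<mu> x * P x b) \<le> (\<Sum>\<^sub>\<infinity>x. \<mu> x * P x b)"
    by (rule finite_sum_le_infsum) (use mu_inv has_sum_imp_summable in \<open>auto simp: mu_nonneg P_nonneg\<close>)
  also have "\<dots> = \<mu> b" using mu_inv infsumI by blast
  moreover have "0 < \<mu> a * P a b" by (rule mult_pos_pos[OF assms])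
  ultimately show ?thesis by simp
qed

lemma mu_pos: "0 < \<mu> x"
proof -
  have "\<exists>x0. 0 < \<mu> x0"
  proof (rule ccontr)
    assume a: "\<not> ?thesis"
    have "\<mu> x = 0" for x
    proof -
      from a have "\<not> 0 < \<mu> x" by blast
      then show ?thesis using mu_nonneg[of x] by linarith
    qed
    then have "\<mu> = (\<lambda>_. 0)" by (simp add: fun_eq_iff)
    then have "((\<lambda>_::'s. 0::real) has_sum 1) UNIV" using mu_hs by simp
    from has_sum_unique[OF this has_sum_0_simp] show False by simp
  qed
  then obtain x0 where x0: "0 < \<mu> x0" by blast
  have "(x0, x) \<in> {(a, b). 0 < P a b}\<^sup>*" using irr unfolding irreducible_chain_def by blast
  then show ?thesis
  proof (induction rule: rtrancl_induct)
    case base then show ?case using x0 .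
  next
    case (step y z) then show ?case using mu_step by blast
  qed
qed

lemma mu_pos_set: assumes "x \<in> A" shows "0 < meas \<mu> A"
proof -
  have "(\<Sum>x\<in>{x}. \<mu> x) \<le> meas \<mu> A" unfolding meas_def
    by (rule finite_sum_le_infsum) (use assms in \<open>auto simp: mu_summ mu_nonneg\<close>)
  then show ?thesis using mu_pos[of x] by simp
qed

lemma sym_sum:
  assumes f: "bnd f" and g: "bnd g"
  shows "(\<Sum>\<^sub>\<infinity>x. \<mu> x * f x * Pop P g x) = (\<Sum>\<^sub>\<infinity>y. \<mu> y * g y * Pop P f y)"
proof -
  obtain cf where cf: "\<And>x. \<bar>f x\<bar> \<le> cf" using f by (metis bndE)
  obtain cg where cg: "\<And>x. \<bar>g x\<bar> \<le> cg" using g by (metis bndE)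
  define w where "w = (\<lambda>z::'s\<times>'s. \<mu> (fst z) * P (fst z) (snd z))"
  define h where "h = (\<lambda>z::'s\<times>'s. f (fst z) * g (snd z))"
  have wS: "w summable_on Sigma UNIV (\<lambda>_. UNIV)"
  proof (rule summable_on_SigmaI)
    show "((\<lambda>y. w (x, y)) has_sum \<mu> x * 1) UNIV" for x
      using has_sum_cmult_right[OF P_hs, of "\<mu> x" x] unfolding w_def by simp
    show "(\<lambda>x. \<mu> x * 1) summable_on UNIV" using mu_summ by simp
    show "0 \<le> w (x, y)" for x y unfolding w_def by (simp add: mu_nonneg P_nonneg)
  qed
  have hS: "(\<lambda>z. w z * h z) summable_on Sigma UNIV (\<lambda>_. UNIV)"
  proof (rule weighted_summable[OF wS])
    show "0 \<le> w z" for z unfolding w_def by (simp add: mu_nonneg P_nonneg)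
    show "\<bar>h z\<bar> \<le> cf * cg" for z unfolding h_def abs_mult
      by (rule mult_mono[OF cf cg]) (use cf[of "fst z"] in auto)
  qed
  define F where "F = (\<lambda>x y. \<mu> x * P x y * (f x * g y))"
  have FS: "(\<lambda>(x, y). F x y) summable_on (UNIV \<times> UNIV)"
  proof -
    have "(\<lambda>(x, y). F x y) = (\<lambda>z. w z * h z)" unfolding F_def w_def h_def by (auto simp: fun_eq_iff)
    then show ?thesis using hS by simp
  qed
  have "(\<Sum>\<^sub>\<infinity>x. \<mu> x * f x * Pop P g x) = (\<Sum>\<^sub>\<infinity>x. \<Sum>\<^sub>\<infinity>y. F x y)"
  proof (rule infsum_cong)
    fix x
    have "\<mu> x * f x * Pop P g x = (\<Sum>\<^sub>\<infinity>y. \<mu> x * f x * (P x y * g y))"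
      unfolding Pop_def by (rule infsum_cmult_right'[symmetric])
    also have "\<dots> = (\<Sum>\<^sub>\<infinity>y. F x y)" unfolding F_def by (rule infsum_cong) (simp add: algebra_simps)
    finally show "\<mu> x * f x * Pop P g x = (\<Sum>\<^sub>\<infinity>y. F x y)" .
  qed
  also have "\<dots> = (\<Sum>\<^sub>\<infinity>y. \<Sum>\<^sub>\<infinity>x. F x y)" by (rule infsum_swap_banach[OF FS])
  also have "\<dots> = (\<Sum>\<^sub>\<infinity>y. \<mu> y * g y * Pop P f y)"
  proof (rule infsum_cong)
    fix y
    have "\<mu> y * g y * Pop P f y = (\<Sum>\<^sub>\<infinity>x. \<mu> y * g y * (P y x * f x))"
      unfolding Pop_def by (rule infsum_cmult_right'[symmetric])
    also have "\<dots> = (\<Sum>\<^sub>\<infinity>x. F x y)" unfolding F_def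
    proof (rule infsum_cong)
      fix x show "\<mu> y * g y * (P y x * f x) = \<mu> x * P x y * (f x * g y)"
        using rev'[of x y] by (simp add: algebra_simps)
    qed
    finally show "(\<Sum>\<^sub>\<infinity>x. F x y) = \<mu> y * g y * Pop P f y" ..
  qed
  finally show ?thesis .
qed

lemma mu_Pop: "bnd g \<Longrightarrow> (\<Sum>\<^sub>\<infinity>x. \<mu> x * Pop P g x) = (\<Sum>\<^sub>\<infinity>x. \<mu> x * g x)"
  using sym_sum[OF bnd_const[of 1], of g] by (simp add: Pop_const)

lemma harm_const:
  assumes wb: "bnd w" and sub: "\<And>x. w x \<le> Pop P w x"
  shows "w x = w y"
proof -
  have Pwb: "bnd (Pop P w)" using wb by (rule bnd_Pop)
  have "(\<Sum>\<^sub>\<infinity>x. \<mu> x * Pop P w x - \<mu> x * w x) = 0"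
    by (subst infsum_diff_real) (use musumm[OF Pwb] musumm[OF wb] mu_Pop[OF wb] in auto)
  then have "(\<Sum>\<^sub>\<infinity>x. \<mu> x * (Pop P w x - w x)) = 0" by (simp add: algebra_simps)
  then have eq0: "\<mu> x * (Pop P w x - w x) = 0" for x
    by (intro nonneg_infsum_le_0D[where A=UNIV]) (auto simp: musumm bnd_diff Pwb wb mu_nonneg sub)
  have harm: "Pop P w x = w x" for x using eq0[of x] mu_pos[of x] by simp
  have w2b: "bnd (\<lambda>y. w y * w y)" using bnd_mult[OF wb wb] .
  define v where "v x = Pop P (\<lambda>y. w y * w y) x - w x * w x" for x
  have v_alt: "v x = Pop P (\<lambda>y. (w y - w x) * (w y - w x)) x" for x
  proof -
    have e0: "Pop P (\<lambda>y. (w y - w x) * (w y - w x)) x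
        = Pop P (\<lambda>y. w y * w y + ((-2 * w x) * w y + w x * w x)) x"
      by (rule arg_cong[where f="\<lambda>f. Pop P f x"]) (auto simp: fun_eq_iff algebra_simps)
    have e1: "Pop P (\<lambda>y. w y * w y + ((-2 * w x) * w y + w x * w x)) x = Pop P (\<lambda>y. w y * w y) x + Pop P (\<lambda>y. (-2 * w x) * w y + w x * w x) x"
      by (rule Pop_add[where f="\<lambda>y. w y * w y" and g="\<lambda>y. (-2 * w x) * w y + w x * w x"])
        (rule w2b bnd_add bnd_cmult wb bnd_const)+
    have e2: "Pop P (\<lambda>y. (-2 * w x) * w y + w x * w x) x = Pop P (\<lambda>y. (-2 * w x) * w y) x + Pop P (\<lambda>y. w x * w x) x"
      by (rule Pop_add[where f="\<lambda>y. (-2 * w x) * w y" and g="\<lambda>y. w x * w x"])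
        (rule bnd_cmult wb bnd_const)+
    have c1: "Pop P (\<lambda>y. (-2 * w x) * w y) x = (-2 * w x) * w x"
      using Pop_cmult[of "-2 * w x" w x] harm[of x] by simp
    have c2: "Pop P (\<lambda>y. w x * w x) x = w x * w x" by (rule Pop_const)
    show ?thesis unfolding e0 e1 e2 c1 c2 v_def by simp
  qed
  have v_nonneg: "0 \<le> v x" for x unfolding v_alt
    by (rule Pop_nonneg) (auto intro!: bnd_mult bnd_diff wb bnd_const)
  have "(\<Sum>\<^sub>\<infinity>x. \<mu> x * v x) = (\<Sum>\<^sub>\<infinity>x. \<mu> x * Pop P (\<lambda>y. w y * w y) x - \<mu> x * (w x * w x))"
    unfolding v_def by (simp add: algebra_simps)
  also have "\<dots> = 0"
    by (subst infsum_diff_real) (use musumm[OF bnd_Pop[OF w2b]] musumm[OF w2b] mu_Pop[OF w2b] in auto)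
  finally have "(\<Sum>\<^sub>\<infinity>x. \<mu> x * v x) = 0" .
  moreover have vb: "bnd v"
  proof -
    have "v = (\<lambda>x. Pop P (\<lambda>y. w y * w y) x - w x * w x)" using v_def by (simp add: fun_eq_iff)
    then show ?thesis by (simp add: bnd_diff bnd_Pop w2b)
  qed
  ultimately have "\<mu> x * v x = 0" for x
    by (intro nonneg_infsum_le_0D[where A=UNIV and f="\<lambda>x. \<mu> x * v x"]) (auto simp: musumm mu_nonneg v_nonneg)
  then have v0: "v x = 0" for x using mu_pos[of x] by (metis less_irrefl mult_eq_0_iff)
  have edge: "w b = w a" if "0 < P a b" for a b
  proof -
    have "Pop P (\<lambda>y. (w y - w a) * (w y - w a)) a = 0" using v0[of a] v_alt[of a] by simp
    then have le: "(\<Sum>\<^sub>\<infinity>y. P a y * ((w y - w a) * (w y - w a))) \<le> 0" unfolding Pop_def by simp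
    have sm: "(\<lambda>y. P a y * ((w y - w a) * (w y - w a))) summable_on UNIV"
      by (rule Psumm) (rule bnd_mult bnd_diff wb bnd_const)+
    have nn: "0 \<le> P a y * ((w y - w a) * (w y - w a))" for y
      by (rule mult_nonneg_nonneg[OF P_nonneg]) simp
    have "P a b * ((w b - w a) * (w b - w a)) = 0"
      by (rule nonneg_infsum_le_0D[OF le sm nn UNIV_I])
    then show ?thesis using that by simp
  qed
  have "(x, y) \<in> {(a, b). 0 < P a b}\<^sup>*" using irr unfolding irreducible_chain_def by blast
  then show ?thesis
  proof (induction rule: rtrancl_induct)
    case base then show ?case ..
  next
    case (step y z) then show ?case using edge by auto
  qed
qed

lemma min_principle:
  assumes ub: "bnd u" and harm: "\<And>x. x \<in> D \<Longrightarrow> u x = Pop P u x"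
    and bd: "\<And>x. x \<notin> D \<Longrightarrow> 0 \<le> u x" and x0: "x0 \<notin> D"
  shows "0 \<le> u x"
proof -
  define w where "w x = max (- u x) 0" for x
  have wb: "bnd w" unfolding w_def by (intro bnd_max bnd_neg ub)
  have P0: "0 \<le> Pop P w x" for x by (rule Pop_nonneg[OF wb]) (simp add: w_def)
  have sub: "w x \<le> Pop P w x" for x
  proof (cases "x \<in> D")
    case True
    have "- u x = Pop P (\<lambda>y. - u y) x" using harm[OF True] by (simp add: Pop_neg)
    also have "\<dots> \<le> Pop P w x" by (rule Pop_mono) (auto simp: w_def bnd_neg ub wb)
    finally show ?thesis using P0[of x] unfolding w_def by simp
  next
    case False then show ?thesis using P0[of x] bd[of x] unfolding w_def by simp
  qed
  have "w x = w x0" by (rule harm_const[OF wb sub])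
  also have "w x0 = 0" using bd[OF x0] unfolding w_def by simp
  finally show ?thesis unfolding w_def by simp
qed

lemma cmp_principle:
  assumes ub: "bnd u" "bnd v" and harm: "\<And>x. x \<in> D \<Longrightarrow> u x = Pop P u x \<and> v x = Pop P v x"
    and bd: "\<And>x. x \<notin> D \<Longrightarrow> u x \<le> v x" and x0: "x0 \<notin> D"
  shows "u x \<le> v x"
proof -
  have "0 \<le> v x - u x"
  proof (rule min_principle[where D=D and u="\<lambda>x. v x - u x", OF bnd_diff[OF ub(2) ub(1)] _ _ x0])
    show "v x - u x = Pop P (\<lambda>x. v x - u x) x" if "x \<in> D" for x
      using harm[OF that] by (simp add: Pop_diff ub)
  qed (use bd in auto)
  then show ?thesis by simp
qed


lemma hit_bounds: "0 \<le> hit_n P A B n x \<and> hit_n P A B n x \<le> 1"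
proof (induction n arbitrary: x)
  case 0 then show ?case by (simp add: P_ge0 P_le1)
next
  case (Suc n)
  have b: "\<forall>y. \<bar>hit_n P A B n y\<bar> \<le> 1" using Suc by (simp add: abs_le_iff)
  have s: "(\<lambda>y. P x y * hit_n P A B n y) summable_on (- (A \<union> B))" by (rule Psumm_bnd[OF b])
  have "(\<Sum>\<^sub>\<infinity>y\<in>- (A \<union> B). P x y * hit_n P A B n y) \<le> (\<Sum>\<^sub>\<infinity>y\<in>- (A \<union> B). P x y)"
    by (rule infsum_mono[OF s P_summ]) (use Suc P_nonneg in \<open>auto intro: mult_left_le\<close>)
  moreover have "0 \<le> (\<Sum>\<^sub>\<infinity>y\<in>- (A \<union> B). P x y * hit_n P A B n y)"
    by (rule infsum_nonneg) (use Suc P_nonneg in auto)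
  ultimately show ?case using P_le1[of x "- (A \<union> B)"] by simp
qed

lemma hit_bnd: "bnd (hit_n P A B n)" by (rule bnd_01) (rule hit_bounds)

lemma hit_partial: "(\<Sum>n<N. hit_n P A B n x) \<le> 1"
proof (induction N arbitrary: x)
  case 0 then show ?case by simp
next
  case (Suc N)
  let ?C = "- (A \<union> B)"
  have "(\<Sum>n<Suc N. hit_n P A B n x) = hit_n P A B 0 x + (\<Sum>n<N. hit_n P A B (Suc n) x)"
    by (rule sum.lessThan_Suc_shift)
  also have "(\<Sum>n<N. hit_n P A B (Suc n) x) = (\<Sum>n<N. \<Sum>\<^sub>\<infinity>y\<in>?C. P x y * hit_n P A B n y)" by simp
  also have "\<dots> = (\<Sum>\<^sub>\<infinity>y\<in>?C. \<Sum>n<N. P x y * hit_n P A B n y)"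
    using infsum_fsum[of "{..<N}" "\<lambda>n y. P x y * hit_n P A B n y" ?C] by (simp add: Psumm hit_bnd)
  also have "\<dots> \<le> (\<Sum>\<^sub>\<infinity>y\<in>?C. P x y)"
  proof (rule infsum_mono)
    show "(\<lambda>y. \<Sum>n<N. P x y * hit_n P A B n y) summable_on ?C"
      using infsum_fsum[of "{..<N}" "\<lambda>n y. P x y * hit_n P A B n y" ?C] by (simp add: Psumm hit_bnd)
    show "P x summable_on ?C" by (rule P_summ)
    fix y
    have "(\<Sum>n<N. P x y * hit_n P A B n y) = P x y * (\<Sum>n<N. hit_n P A B n y)" by (simp add: sum_distrib_left)
    also have "\<dots> \<le> P x y * 1" by (rule mult_left_mono[OF Suc.IH P_nonneg])
    finally show "(\<Sum>n<N. P x y * hit_n P A B n y) \<le> P x y" by simp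
  qed
  finally have "(\<Sum>n<Suc N. hit_n P A B n x) \<le> (\<Sum>\<^sub>\<infinity>y\<in>A - B. P x y) + (\<Sum>\<^sub>\<infinity>y\<in>?C. P x y)" by simp
  also have "\<dots> = (\<Sum>\<^sub>\<infinity>y\<in>(A - B) \<union> ?C. P x y)"
    by (rule infsum_Un_disjoint[symmetric]) (auto simp: P_summ)
  also have "\<dots> \<le> 1" by (rule P_le1)
  finally show ?case .
qed

lemma hit_summable: "summable (\<lambda>n. hit_n P A B n x)"
  by (rule summableI_nonneg_bounded[where x=1]) (auto simp: hit_bounds hit_partial)

lemma hitprob_bounds: "0 \<le> hitprob P A B x \<and> hitprob P A B x \<le> 1"
  unfolding hitprob_def using hit_summable
  by (auto intro!: suminf_nonneg suminf_le_const simp: hit_bounds hit_partial)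

lemma hitprob_bnd: "bnd (hitprob P A B)" by (rule bnd_01) (rule hitprob_bounds)

lemma hitprob_first_step:
  "hitprob P A B x = (\<Sum>\<^sub>\<infinity>y\<in>A - B. P x y) + (\<Sum>\<^sub>\<infinity>y\<in>- (A \<union> B). P x y * hitprob P A B y)"
proof -
  let ?C = "- (A \<union> B)"
  define G where "G = (\<lambda>y n. P x y * hit_n P A B n y)"
  have Gs: "((\<lambda>n. G y n) has_sum P x y * hitprob P A B y) UNIV" for y
  proof -
    have "(\<lambda>n. hit_n P A B n y) sums hitprob P A B y"
      unfolding hitprob_def using hit_summable by (rule summable_sums)
    then have "(\<lambda>n. G y n) sums (P x y * hitprob P A B y)" unfolding G_def by (rule sums_mult)
    then show ?thesis by (rule sums_nonneg_imp_has_sum) (simp add: G_def P_nonneg hit_bounds)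
  qed
  have GS: "(\<lambda>(y, n). G y n) summable_on Sigma ?C (\<lambda>_. UNIV)"
  proof (rule summable_on_SigmaI)
    show "((\<lambda>n. (\<lambda>(y, n). G y n) (y, n)) has_sum P x y * hitprob P A B y) UNIV" for y using Gs by simp
    show "(\<lambda>y. P x y * hitprob P A B y) summable_on ?C" by (rule Psumm[OF hitprob_bnd])
    show "0 \<le> (\<lambda>(y, n). G y n) (y, n)" for y n by (simp add: G_def P_nonneg hit_bounds)
  qed
  then have GS': "(\<lambda>(y, n). G y n) summable_on (?C \<times> UNIV)" by simp
  have "(\<Sum>\<^sub>\<infinity>y\<in>?C. P x y * hitprob P A B y) = (\<Sum>\<^sub>\<infinity>y\<in>?C. \<Sum>\<^sub>\<infinity>n. G y n)"
  proof (rule infsum_cong)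
    fix y show "P x y * hitprob P A B y = (\<Sum>\<^sub>\<infinity>n. G y n)" using infsumI[OF Gs[of y]] by simp
  qed
  also have "\<dots> = (\<Sum>\<^sub>\<infinity>n. \<Sum>\<^sub>\<infinity>y\<in>?C. G y n)" by (rule infsum_swap_banach[OF GS'])
  finally have e1: "(\<Sum>\<^sub>\<infinity>y\<in>?C. P x y * hitprob P A B y) = (\<Sum>\<^sub>\<infinity>n. hit_n P A B (Suc n) x)"
    by (simp add: G_def)
  have "(\<lambda>n. \<Sum>\<^sub>\<infinity>y\<in>?C. G y n) summable_on UNIV"
  proof -
    have "(\<lambda>(n, y). G y n) summable_on (UNIV \<times> ?C)"
      using GS' summable_on_swap[of "\<lambda>(y, n). G y n" ?C UNIV] by simp
    then show ?thesis using summable_on_Sigma_banach[of "\<lambda>n y. G y n" UNIV "\<lambda>_. ?C"] by simp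
  qed
  then have "(\<lambda>n. hit_n P A B (Suc n) x) summable_on UNIV" by (simp add: G_def)
  then have "(\<Sum>\<^sub>\<infinity>n. hit_n P A B (Suc n) x) = (\<Sum>n. hit_n P A B (Suc n) x)"
    using has_sum_imp_sums[OF has_sum_infsum] sums_unique by blast
  also have "\<dots> = hitprob P A B x - hit_n P A B 0 x" unfolding hitprob_def
    by (rule suminf_split_head[OF hit_summable])
  finally show ?thesis using e1 by simp
qed


lemma eq_pot_bounds: "0 \<le> eq_pot P A B x \<and> eq_pot P A B x \<le> 1"
  unfolding eq_pot_def using hitprob_bounds by auto
lemma eq_pot_bnd: "bnd (eq_pot P A B)" by (rule bnd_01) (rule eq_pot_bounds)

lemma hitprob_Pop:
  assumes disj: "A \<inter> B = {}"
  shows "hitprob P A B x = Pop P (eq_pot P A B) x"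
proof -
  let ?h = "eq_pot P A B" and ?C = "- (A \<union> B)"
  have s: "(\<lambda>y. P x y * ?h y) summable_on S" for S by (rule Psumm[OF eq_pot_bnd])
  have "Pop P ?h x = (\<Sum>\<^sub>\<infinity>y\<in>A \<union> (B \<union> ?C). P x y * ?h y)" unfolding Pop_def
    by (rule arg_cong[where f="infsum _"]) auto
  also have "\<dots> = (\<Sum>\<^sub>\<infinity>y\<in>A. P x y * ?h y) + (\<Sum>\<^sub>\<infinity>y\<in>B \<union> ?C. P x y * ?h y)"
    by (rule infsum_Un_disjoint) (use disj s in auto)
  also have "(\<Sum>\<^sub>\<infinity>y\<in>B \<union> ?C. P x y * ?h y) = (\<Sum>\<^sub>\<infinity>y\<in>B. P x y * ?h y) + (\<Sum>\<^sub>\<infinity>y\<in>?C. P x y * ?h y)"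
    by (rule infsum_Un_disjoint) (use s in auto)
  also have "(\<Sum>\<^sub>\<infinity>y\<in>A. P x y * ?h y) = (\<Sum>\<^sub>\<infinity>y\<in>A - B. P x y)"
    using disj by (intro infsum_cong_neutral) (auto simp: eq_pot_def)
  also have "(\<Sum>\<^sub>\<infinity>y\<in>B. P x y * ?h y) = 0"
    using disj by (intro infsum_0) (auto simp: eq_pot_def)
  also have "(\<Sum>\<^sub>\<infinity>y\<in>?C. P x y * ?h y) = (\<Sum>\<^sub>\<infinity>y\<in>?C. P x y * hitprob P A B y)"
    by (rule infsum_cong) (simp add: eq_pot_def)
  finally show ?thesis using hitprob_first_step[of A B x] by simp
qed

lemma eq_pot_harm:
  assumes "A \<inter> B = {}" "x \<notin> A \<union> B"
  shows "eq_pot P A B x = Pop P (eq_pot P A B) x"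
  using assms hitprob_Pop[OF assms(1)] by (simp add: eq_pot_def)

lemma eq_pot_compl:
  assumes disj: "A \<inter> B = {}" and ne: "a0 \<in> A \<union> B"
  shows "eq_pot P B A x = 1 - eq_pot P A B x"
proof -
  let ?D = "- (A \<union> B)"
  have disj': "B \<inter> A = {}" using disj by blast
  have vb: "bnd (\<lambda>x. 1 - eq_pot P A B x)" by (intro bnd_diff bnd_const eq_pot_bnd)
  have harm: "eq_pot P B A x = Pop P (eq_pot P B A) x \<and> 1 - eq_pot P A B x = Pop P (\<lambda>x. 1 - eq_pot P A B x) x"
    if "x \<in> ?D" for x
  proof
    show "eq_pot P B A x = Pop P (eq_pot P B A) x" by (rule eq_pot_harm[OF disj']) (use that in auto)
    have "eq_pot P A B x = Pop P (eq_pot P A B) x" by (rule eq_pot_harm[OF disj]) (use that in auto)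
    then show "1 - eq_pot P A B x = Pop P (\<lambda>x. 1 - eq_pot P A B x) x"
      by (simp add: Pop_diff bnd_const eq_pot_bnd Pop_const)
  qed
  have bd: "eq_pot P B A x = 1 - eq_pot P A B x" if "x \<notin> ?D" for x
    using that disj by (auto simp: eq_pot_def)
  have a0: "a0 \<notin> ?D" using ne by auto
  have "eq_pot P B A x \<le> 1 - eq_pot P A B x"
    by (rule cmp_principle[OF eq_pot_bnd vb harm _ a0]) (use bd in auto)
  moreover have "1 - eq_pot P A B x \<le> eq_pot P B A x"
    by (rule cmp_principle[OF vb eq_pot_bnd _ _ a0]) (use bd harm in auto)
  ultimately show ?thesis by simp
qed

lemma hitprob_compl:
  assumes disj: "A \<inter> B = {}" and ne: "a0 \<in> A \<union> B"
  shows "hitprob P B A x = 1 - Pop P (eq_pot P A B) x"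
proof -
  have disj': "B \<inter> A = {}" using disj by blast
  have e: "eq_pot P B A = (\<lambda>x. 1 - eq_pot P A B x)" by (rule ext) (rule eq_pot_compl[OF disj ne])
  have "hitprob P B A x = Pop P (eq_pot P B A) x" by (rule hitprob_Pop[OF disj'])
  also have "\<dots> = Pop P (\<lambda>x. 1 - eq_pot P A B x) x" unfolding e ..
  also have "\<dots> = 1 - Pop P (eq_pot P A B) x" by (simp add: Pop_diff bnd_const eq_pot_bnd Pop_const)
  finally show ?thesis .
qed

lemma Dform_alt:
  assumes "bnd f" "bnd g"
  shows "Dform P \<mu> f g = (\<Sum>\<^sub>\<infinity>x. \<mu> x * (f x * g x)) - (\<Sum>\<^sub>\<infinity>x. \<mu> x * f x * Pop P g x)"
proof -
  have "Dform P \<mu> f g = (\<Sum>\<^sub>\<infinity>x. \<mu> x * (f x * g x) - \<mu> x * f x * Pop P g x)"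
    unfolding Dform_def by (rule infsum_cong) (simp add: algebra_simps)
  show ?thesis unfolding \<open>Dform P \<mu> f g = _\<close>
  proof (rule infsum_diff_real)
    show "(\<lambda>x. \<mu> x * (f x * g x)) summable_on UNIV" by (rule musumm) (intro bnd_mult assms)
    have "(\<lambda>x. \<mu> x * (f x * Pop P g x)) summable_on UNIV" by (rule musumm) (intro bnd_mult assms bnd_Pop)
    then show "(\<lambda>x. \<mu> x * f x * Pop P g x) summable_on UNIV" by (simp add: mult.assoc)
  qed
qed


lemma Dform_summ: "bnd f \<Longrightarrow> bnd g \<Longrightarrow> (\<lambda>x. \<mu> x * (f x * (g x - Pop P g x))) summable_on A"
  by (intro musumm bnd_mult bnd_diff bnd_Pop)

lemma Dform_sym: assumes "bnd f" "bnd g" shows "Dform P \<mu> f g = Dform P \<mu> g f"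
  unfolding Dform_alt[OF assms] Dform_alt[OF assms(2,1)] sym_sum[OF assms] by (simp add: mult.commute)

lemma Q_pw:
  assumes f: "bnd f" and g: "bnd g"
  shows "Pop P (\<lambda>y. (f x - f y) * (g x - g y)) x
     = f x * g x - f x * Pop P g x - (g x * Pop P f x - Pop P (\<lambda>y. f y * g y) x)"
proof -
  have e0: "Pop P (\<lambda>y. (f x - f y) * (g x - g y)) x
      = Pop P (\<lambda>y. f y * g y + ((- f x) * g y + ((- g x) * f y + f x * g x))) x"
    by (rule arg_cong[where f="\<lambda>f. Pop P f x"]) (auto simp: fun_eq_iff algebra_simps)
  have e1: "Pop P (\<lambda>y. f y * g y + ((- f x) * g y + ((- g x) * f y + f x * g x))) x
      = Pop P (\<lambda>y. f y * g y) x + Pop P (\<lambda>y. (- f x) * g y + ((- g x) * f y + f x * g x)) x"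
    by (rule Pop_add[where f="\<lambda>y. f y * g y"]) (rule bnd_mult bnd_add bnd_cmult bnd_const f g)+
  have e2: "Pop P (\<lambda>y. (- f x) * g y + ((- g x) * f y + f x * g x)) x
      = Pop P (\<lambda>y. (- f x) * g y) x + Pop P (\<lambda>y. (- g x) * f y + f x * g x) x"
    by (rule Pop_add[where f="\<lambda>y. (- f x) * g y"]) (rule bnd_mult bnd_add bnd_cmult bnd_const f g)+
  have e3: "Pop P (\<lambda>y. (- g x) * f y + f x * g x) x
      = Pop P (\<lambda>y. (- g x) * f y) x + Pop P (\<lambda>y. f x * g x) x"
    by (rule Pop_add[where f="\<lambda>y. (- g x) * f y"]) (rule bnd_mult bnd_add bnd_cmult bnd_const f g)+
  show ?thesis unfolding e0 e1 e2 e3 Pop_cmult Pop_const by simp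
qed

lemma Q_rep:
  assumes f: "bnd f" and g: "bnd g"
  shows "2 * Dform P \<mu> f g = (\<Sum>\<^sub>\<infinity>x. \<mu> x * Pop P (\<lambda>y. (f x - f y) * (g x - g y)) x)"
proof -
  have fg: "bnd (\<lambda>y. f y * g y)" by (rule bnd_mult[OF f g])
  have s1: "(\<lambda>x. \<mu> x * (f x * g x)) summable_on UNIV" by (rule musumm[OF fg])
  have s2: "(\<lambda>x. \<mu> x * f x * Pop P g x) summable_on UNIV"
    using musumm[OF bnd_mult[OF f bnd_Pop[OF g]]] by (simp add: mult.assoc)
  have s3: "(\<lambda>x. \<mu> x * g x * Pop P f x) summable_on UNIV"
    using musumm[OF bnd_mult[OF g bnd_Pop[OF f]]] by (simp add: mult.assoc)
  have s4: "(\<lambda>x. \<mu> x * Pop P (\<lambda>y. f y * g y) x) summable_on UNIV" by (rule musumm[OF bnd_Pop[OF fg]])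
  have "(\<Sum>\<^sub>\<infinity>x. \<mu> x * Pop P (\<lambda>y. (f x - f y) * (g x - g y)) x)
     = (\<Sum>\<^sub>\<infinity>x. \<mu> x * (f x * g x) - \<mu> x * f x * Pop P g x - (\<mu> x * g x * Pop P f x - \<mu> x * Pop P (\<lambda>y. f y * g y) x))"
  proof (rule infsum_cong)
    fix x
    show "\<mu> x * Pop P (\<lambda>y. (f x - f y) * (g x - g y)) x =
      \<mu> x * (f x * g x) - \<mu> x * f x * Pop P g x - (\<mu> x * g x * Pop P f x - \<mu> x * Pop P (\<lambda>y. f y * g y) x)"
      unfolding Q_pw[OF f g] by (simp only: right_diff_distrib mult.assoc)
  qed
  also have "\<dots> = (\<Sum>\<^sub>\<infinity>x. \<mu> x * (f x * g x)) - (\<Sum>\<^sub>\<infinity>x. \<mu> x * f x * Pop P g x)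
       - ((\<Sum>\<^sub>\<infinity>x. \<mu> x * g x * Pop P f x) - (\<Sum>\<^sub>\<infinity>x. \<mu> x * Pop P (\<lambda>y. f y * g y) x))"
    by (rule infsum_4[OF s1 s2 s3 s4])
  also have "(\<Sum>\<^sub>\<infinity>x. \<mu> x * g x * Pop P f x) = (\<Sum>\<^sub>\<infinity>x. \<mu> x * f x * Pop P g x)"
    by (rule sym_sum[OF g f])
  also have "(\<Sum>\<^sub>\<infinity>x. \<mu> x * Pop P (\<lambda>y. f y * g y) x) = (\<Sum>\<^sub>\<infinity>x. \<mu> x * (f x * g x))"
    by (rule mu_Pop[OF fg])
  finally show ?thesis unfolding Dform_alt[OF f g] by simp
qed

lemma Dform_nonneg: assumes g: "bnd g" shows "0 \<le> Dform P \<mu> g g"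
proof -
  have "0 \<le> (\<Sum>\<^sub>\<infinity>x. \<mu> x * Pop P (\<lambda>y. (g x - g y) * (g x - g y)) x)"
  proof (rule infsum_nonneg)
    fix x
    have b: "bnd (\<lambda>y. (g x - g y) * (g x - g y))" by (rule bnd_mult bnd_diff bnd_const g)+
    have "0 \<le> Pop P (\<lambda>y. (g x - g y) * (g x - g y)) x" by (rule Pop_nonneg[OF b]) simp
    then show "0 \<le> \<mu> x * Pop P (\<lambda>y. (g x - g y) * (g x - g y)) x" by (rule mult_nonneg_nonneg[OF mu_nonneg])
  qed
  then show ?thesis using Q_rep[OF g g] by simp
qed

lemma Dform_cmp:
  assumes f: "bnd f" and h: "bnd h"
    and pw: "\<And>a b. (f a - f b) * (f a - f b) \<le> L * ((f a - f b) * (h a - h b))"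
  shows "Dform P \<mu> f f \<le> L * Dform P \<mu> f h"
proof -
  have b1: "bnd (\<lambda>y. (f x - f y) * (f x - f y))" for x by (rule bnd_mult bnd_diff bnd_const f)+
  have b2: "bnd (\<lambda>y. (f x - f y) * (h x - h y))" for x by (rule bnd_mult bnd_diff bnd_const f h)+
  have "2 * Dform P \<mu> f f = (\<Sum>\<^sub>\<infinity>x. \<mu> x * Pop P (\<lambda>y. (f x - f y) * (f x - f y)) x)"
    by (rule Q_rep[OF f f])
  also have "\<dots> \<le> (\<Sum>\<^sub>\<infinity>x. L * (\<mu> x * Pop P (\<lambda>y. (f x - f y) * (h x - h y)) x))"
  proof (rule infsum_mono)
    have "bnd (\<lambda>x. Pop P (\<lambda>y. (f x - f y) * (f x - f y)) x)"
    proof -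
      obtain c where c: "\<And>x. \<bar>f x\<bar> \<le> c" using f by (metis bndE)
      have "\<bar>Pop P (\<lambda>y. (f x - f y) * (f x - f y)) x\<bar> \<le> (2*c) * (2*c)" for x
        by (rule Pop_bound) (rule abs_prod_bound; rule c)
      then show ?thesis by (rule bndI)
    qed
    then show "(\<lambda>x. \<mu> x * Pop P (\<lambda>y. (f x - f y) * (f x - f y)) x) summable_on UNIV" by (rule musumm)
    have "bnd (\<lambda>x. Pop P (\<lambda>y. (f x - f y) * (h x - h y)) x)"
    proof -
      obtain c where c: "\<And>x. \<bar>f x\<bar> \<le> c" using f by (metis bndE)
      obtain d where d: "\<And>x. \<bar>h x\<bar> \<le> d" using h by (metis bndE)
      have "\<bar>Pop P (\<lambda>y. (f x - f y) * (h x - h y)) x\<bar> \<le> (2*c) * (2*d)" for x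
        by (rule Pop_bound) (rule abs_prod_bound; rule c d)
      then show ?thesis by (rule bndI)
    qed
    then show "(\<lambda>x. L * (\<mu> x * Pop P (\<lambda>y. (f x - f y) * (h x - h y)) x)) summable_on UNIV"
      by (intro summable_on_cmult_right musumm)
    fix x
    have "Pop P (\<lambda>y. (f x - f y) * (f x - f y)) x \<le> Pop P (\<lambda>y. L * ((f x - f y) * (h x - h y))) x"
      by (rule Pop_mono[OF b1 bnd_cmult[OF b2] pw])
    also have "\<dots> = L * Pop P (\<lambda>y. (f x - f y) * (h x - h y)) x" by (rule Pop_cmult)
    finally have le: "Pop P (\<lambda>y. (f x - f y) * (f x - f y)) x \<le> L * Pop P (\<lambda>y. (f x - f y) * (h x - h y)) x" .
    show "\<mu> x * Pop P (\<lambda>y. (f x - f y) * (f x - f y)) x \<le> L * (\<mu> x * Pop P (\<lambda>y. (f x - f y) * (h x - h y)) x)"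
      using mult_left_mono[OF le mu_nonneg[of x]] by (simp add: mult.left_commute)
  qed
  also have "\<dots> = L * (\<Sum>\<^sub>\<infinity>x. \<mu> x * Pop P (\<lambda>y. (f x - f y) * (h x - h y)) x)"
    by (rule infsum_cmult_right')
  also have "\<dots> = L * (2 * Dform P \<mu> f h)" using Q_rep[OF f h] by simp
  finally show ?thesis by simp
qed

lemma Dform_expand:
  assumes f: "bnd f" and g: "bnd g"
  shows "Dform P \<mu> (\<lambda>x. f x - g x) (\<lambda>x. f x - g x) = Dform P \<mu> f f - 2 * Dform P \<mu> f g + Dform P \<mu> g g"
proof -
  have "Dform P \<mu> (\<lambda>x. f x - g x) (\<lambda>x. f x - g x)
     = (\<Sum>\<^sub>\<infinity>x. \<mu> x * (f x * (f x - Pop P f x)) - \<mu> x * (f x * (g x - Pop P g x))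
          - (\<mu> x * (g x * (f x - Pop P f x)) - \<mu> x * (g x * (g x - Pop P g x))))"
    unfolding Dform_def by (rule infsum_cong) (simp add: Pop_diff f g algebra_simps)
  also have "\<dots> = Dform P \<mu> f f - Dform P \<mu> f g - (Dform P \<mu> g f - Dform P \<mu> g g)"
    unfolding Dform_def by (rule infsum_4) (rule Dform_summ; rule f g)+
  finally show ?thesis using Dform_sym[OF f g] by simp
qed

lemma cap_Dform:
  assumes disj: "A \<inter> B = {}" and a0: "a0 \<in> A" and f: "bnd f"
    and f1: "\<And>x. x \<in> A \<Longrightarrow> f x = 1" and f0: "\<And>x. x \<in> B \<Longrightarrow> f x = 0"
  shows "Dform P \<mu> f (eq_pot P A B) = cap P \<mu> A B"
  unfolding Dform_def cap_def
proof (rule infsum_cong_neutral)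
  let ?h = "eq_pot P A B"
  show "\<mu> x * (f x * (?h x - Pop P ?h x)) = 0" if "x \<in> UNIV - A" for x
  proof (cases "x \<in> B")
    case True then show ?thesis using f0 by simp
  next
    case False then show ?thesis using that eq_pot_harm[OF disj, of x] by simp
  qed
  show "\<mu> x * (f x * (?h x - Pop P ?h x)) = \<mu> x * hitprob P B A x" if "x \<in> UNIV \<inter> A" for x
    using that f1 hitprob_compl[OF disj, of a0 x] a0 by (simp add: eq_pot_def)
qed simp

lemma dirichlet:
  assumes disj: "A \<inter> B = {}" and a0: "a0 \<in> A" and f: "bnd f"
    and f1: "\<And>x. x \<in> A \<Longrightarrow> f x = 1" and f0: "\<And>x. x \<in> B \<Longrightarrow> f x = 0"
  shows "cap P \<mu> A B \<le> Dform P \<mu> f f"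
proof -
  let ?h = "eq_pot P A B"
  have hh: "Dform P \<mu> ?h ?h = cap P \<mu> A B"
    by (rule cap_Dform[OF disj a0 eq_pot_bnd]) (use disj in \<open>auto simp: eq_pot_def\<close>)
  have fh: "Dform P \<mu> f ?h = cap P \<mu> A B" by (rule cap_Dform[OF disj a0 f f1 f0])
  have "0 \<le> Dform P \<mu> (\<lambda>x. f x - ?h x) (\<lambda>x. f x - ?h x)" by (rule Dform_nonneg) (intro bnd_diff f eq_pot_bnd)
  then show ?thesis unfolding Dform_expand[OF f eq_pot_bnd] hh fh by simp
qed

lemma cap_nonneg: "0 \<le> cap P \<mu> A B"
  unfolding cap_def by (rule infsum_nonneg) (simp add: mu_nonneg hitprob_bounds)

lemma cap_pos:
  assumes disj: "A \<inter> B = {}" and a0: "a0 \<in> A" and b0: "b0 \<in> B"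
  shows "0 < cap P \<mu> A B"
proof (rule ccontr)
  let ?h = "eq_pot P A B"
  assume "\<not> 0 < cap P \<mu> A B"
  then have le: "(\<Sum>\<^sub>\<infinity>x\<in>A. \<mu> x * hitprob P B A x) \<le> 0" unfolding cap_def by simp
  have z: "\<mu> x * hitprob P B A x = 0" if "x \<in> A" for x
    by (rule nonneg_infsum_le_0D[OF le musumm[OF hitprob_bnd] _ that]) (simp add: mu_nonneg hitprob_bounds)
  have sub: "?h x \<le> Pop P ?h x" for x
  proof -
    consider "x \<in> A" | "x \<in> B" | "x \<notin> A \<union> B" by blast
    then show ?thesis
    proof cases
      case 1
      then have "hitprob P B A x = 0" using z[OF 1] mu_pos[of x] by simp
      then show ?thesis using 1 hitprob_compl[OF disj, of a0 x] a0 by (simp add: eq_pot_def)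
    next
      case 2
      then have "?h x = 0" using disj by (auto simp: eq_pot_def)
      then show ?thesis using Pop_nonneg[OF eq_pot_bnd, of A B x] eq_pot_bounds by simp
    next
      case 3 then show ?thesis using eq_pot_harm[OF disj 3] by simp
    qed
  qed
  have "?h a0 = ?h b0" by (rule harm_const[OF eq_pot_bnd sub])
  moreover have "b0 \<notin> A" using disj b0 by blast
  ultimately show False using a0 b0 by (auto simp: eq_pot_def)
qed

lemma cap_sym:
  assumes disj: "A \<inter> B = {}" and a0: "a0 \<in> A"
  shows "cap P \<mu> A B = (\<Sum>\<^sub>\<infinity>x\<in>B. \<mu> x * hitprob P A B x)"
proof -
  let ?h = "eq_pot P A B"
  let ?F = "\<lambda>x. \<mu> x * (?h x - Pop P ?h x)"
  have Fs: "?F summable_on S" for S by (intro musumm bnd_diff eq_pot_bnd bnd_Pop)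
  have "(\<Sum>\<^sub>\<infinity>x. ?F x) = (\<Sum>\<^sub>\<infinity>x. \<mu> x * ?h x - \<mu> x * Pop P ?h x)"
    by (simp add: algebra_simps)
  also have "\<dots> = 0"
    by (subst infsum_diff_real) (use musumm[OF eq_pot_bnd] musumm[OF bnd_Pop[OF eq_pot_bnd]] mu_Pop[OF eq_pot_bnd] in auto)
  finally have z: "(\<Sum>\<^sub>\<infinity>x. ?F x) = 0" .
  have "(\<Sum>\<^sub>\<infinity>x. ?F x) = (\<Sum>\<^sub>\<infinity>x\<in>A \<union> B. ?F x)"
    by (rule infsum_cong_neutral) (use eq_pot_harm[OF disj] in auto)
  also have "\<dots> = (\<Sum>\<^sub>\<infinity>x\<in>A. ?F x) + (\<Sum>\<^sub>\<infinity>x\<in>B. ?F x)"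
    by (rule infsum_Un_disjoint[OF Fs Fs disj])
  also have "(\<Sum>\<^sub>\<infinity>x\<in>A. ?F x) = cap P \<mu> A B" unfolding cap_def
  proof (rule infsum_cong)
    fix x assume x: "x \<in> A"
    have "hitprob P B A x = 1 - Pop P ?h x" by (rule hitprob_compl[OF disj, of a0]) (use a0 in auto)
    then show "?F x = \<mu> x * hitprob P B A x" using x by (simp add: eq_pot_def)
  qed
  also have "(\<Sum>\<^sub>\<infinity>x\<in>B. ?F x) = - (\<Sum>\<^sub>\<infinity>x\<in>B. \<mu> x * hitprob P A B x)"
    unfolding infsum_uminus[symmetric]
    by (rule infsum_cong) (use disj hitprob_Pop[OF disj] in \<open>auto simp: eq_pot_def\<close>)
  finally show ?thesis using z by simp
qed


lemma valley_sum:
  assumes ne: "\<And>j. j < K \<Longrightarrow> M j \<noteq> {}" and dj: "\<And>j k. j < K \<Longrightarrow> k < K \<Longrightarrow> j \<noteq> k \<Longrightarrow> M j \<inter> M k = {}"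
    and K: "0 < K"
  shows "(\<Sum>j<K. eq_pot P (M j) (Mbig M K - M j) x) = 1"
proof -
  let ?Mb = "Mbig M K"
  let ?E = "\<lambda>x. \<Sum>j<K. eq_pot P (M j) (?Mb - M j) x"
  have Eb: "bnd ?E"
  proof (rule bndI[of _ "real K"])
    fix x
    have "\<bar>?E x\<bar> \<le> (\<Sum>j<K. \<bar>eq_pot P (M j) (?Mb - M j) x\<bar>)" by (rule sum_abs)
    also have "\<dots> \<le> (\<Sum>j<K. 1)" by (rule sum_mono) (use eq_pot_bounds in auto)
    finally show "\<bar>?E x\<bar> \<le> real K" by simp
  qed
  obtain m0 where m0: "m0 \<in> M 0" using ne[OF K] by blast
  have m0': "m0 \<notin> - ?Mb" using m0 K unfolding Mbig_def by auto
  have harm: "?E x = Pop P ?E x \<and> 1 = Pop P (\<lambda>_. 1) x" if "x \<in> - ?Mb" for x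
  proof
    have "?E x = (\<Sum>j<K. Pop P (eq_pot P (M j) (?Mb - M j)) x)"
    proof (rule sum.cong)
      fix j assume jK: "j \<in> {..<K}"
      show "eq_pot P (M j) (?Mb - M j) x = Pop P (eq_pot P (M j) (?Mb - M j)) x"
        by (rule eq_pot_harm) (use that jK in \<open>auto simp: Mbig_def\<close>)
    qed simp
    also have "\<dots> = Pop P ?E x" by (rule Pop_sum[symmetric]) (auto simp: eq_pot_bnd)
    finally show "?E x = Pop P ?E x" .
    show "1 = Pop P (\<lambda>_. 1) x" by (simp add: Pop_const)
  qed
  have bd: "?E x = 1" if "x \<notin> - ?Mb" for x
  proof -
    have "x \<in> ?Mb" using that by simp
    then obtain k where k: "k < K" "x \<in> M k" unfolding Mbig_def by blast
    have "?E x = (\<Sum>j<K. if j = k then 1 else 0)"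
    proof (rule sum.cong)
      fix j assume j: "j \<in> {..<K}"
      show "eq_pot P (M j) (?Mb - M j) x = (if j = k then 1 else 0)"
      proof (cases "j = k")
        case True then show ?thesis using k by (simp add: eq_pot_def)
      next
        case False
        then have "x \<notin> M j" using dj[of j k] j k by auto
        moreover have "x \<in> ?Mb" using k unfolding Mbig_def by auto
        ultimately show ?thesis using False by (simp add: eq_pot_def)
      qed
    qed simp
    also have "\<dots> = 1" using k by simp
    finally show ?thesis .
  qed
  have "?E x \<le> 1" by (rule cmp_principle[OF Eb bnd_const harm _ m0']) (use bd in auto)
  moreover have "1 \<le> ?E x" by (rule cmp_principle[OF bnd_const Eb _ _ m0']) (use bd harm in auto)
  ultimately show ?thesis by simp
qed

end

definition clamp01 :: "real \<Rightarrow> real" where "clamp01 t = max 0 (min 1 t)"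

lemma clamp01_lip: "t \<le> s \<Longrightarrow> 0 \<le> clamp01 s - clamp01 t \<and> clamp01 s - clamp01 t \<le> s - t"
  unfolding clamp01_def by (auto simp: max_def min_def)

lemma phi_pw:
  fixes d a b :: real
  assumes d: "0 < d" "d < 1/2"
  defines "L \<equiv> 1 / (1 - 2 * d)"
  shows "(clamp01 ((a - d) * L) - clamp01 ((b - d) * L)) * (clamp01 ((a - d) * L) - clamp01 ((b - d) * L))
     \<le> L * ((clamp01 ((a - d) * L) - clamp01 ((b - d) * L)) * (a - b))"
proof -
  have L: "0 < L" unfolding L_def using d by simp
  have key: "(clamp01 ((s - d) * L) - clamp01 ((t - d) * L)) * (clamp01 ((s - d) * L) - clamp01 ((t - d) * L))
     \<le> L * ((clamp01 ((s - d) * L) - clamp01 ((t - d) * L)) * (s - t))" if st: "t \<le> s" for s t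
  proof -
    have "(t - d) * L \<le> (s - d) * L" using st L by (simp add: mult_right_mono)
    from clamp01_lip[OF this] have 1: "0 \<le> clamp01 ((s - d) * L) - clamp01 ((t - d) * L)"
      and 2: "clamp01 ((s - d) * L) - clamp01 ((t - d) * L) \<le> L * (s - t)" by (auto simp: algebra_simps)
    show ?thesis using mult_left_mono[OF 2 1] by (simp add: algebra_simps)
  qed
  show ?thesis
  proof (cases "b \<le> a")
    case True then show ?thesis by (rule key)
  next
    case False
    then have "a \<le> b" by simp
    from key[OF this] show ?thesis by (simp add: algebra_simps)
  qed
qed

theorem mainTheorem14:
  fixes P :: "'s::countable \<Rightarrow> 's \<Rightarrow> real" and \<mu> :: "'s \<Rightarrow> real"
    and \<rho> :: real and M S :: "nat \<Rightarrow> 's set" and K i :: nat and IB :: "nat set"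
    and \<delta> :: real
  assumes chain: "rev_pos_rec_chain P \<mu>"
    and rho: "0 < \<rho>"
    and K: "2 \<le> K"
    and meta: "metastable P \<mu> \<rho> M K"
    and part: "metastable_partition P M K S"
    and i: "i < K"
    and IB: "IB \<subseteq> {..<K} - {i}" "IB \<noteq> {}"
    and delta: "0 < \<delta>" "\<delta> < 1/2"
  shows "1 - 2 * \<delta> \<le> cap P \<mu> (M i) (\<Union>j\<in>IB. M j)
            / cap P \<mu> (harm_nbhd P M S {i} \<delta> IB) (harm_nbhd P M S IB \<delta> {i})
       \<and> cap P \<mu> (M i) (\<Union>j\<in>IB. M j)
            / cap P \<mu> (harm_nbhd P M S {i} \<delta> IB) (harm_nbhd P M S IB \<delta> {i}) \<le> 1
       \<and> meas \<mu> (S i - harm_nbhd P M S {i} \<delta> IB) \<le> \<rho> / \<delta> * meas \<mu> (M i)"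
proof -
  interpret mchain P \<mu>
    by unfold_locales (use chain in \<open>auto simp: rev_pos_rec_chain_def\<close>)
  let ?Mb = "Mbig M K"
  define B where "B = (\<Union>j\<in>IB. M j)"
  define UA where "UA = harm_nbhd P M S {i} \<delta> IB"
  define UB where "UB = harm_nbhd P M S IB \<delta> {i}"
  define h where "h = eq_pot P (M i) B"
  have Mne: "\<And>j. j < K \<Longrightarrow> M j \<noteq> {}"
    and Mdj: "\<And>j k. j < K \<Longrightarrow> k < K \<Longrightarrow> j \<noteq> k \<Longrightarrow> M j \<inter> M k = {}"
    and metaA: "\<And>A. A \<noteq> {} \<Longrightarrow> A \<subseteq> - ?Mb \<Longrightarrow> real K * p_esc P \<mu> M K \<le> \<rho> * hitprob_cond P \<mu> A ?Mb A"
    using meta unfolding metastable_def by blast+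
  have Sdj: "\<And>j k. j < K \<Longrightarrow> k < K \<Longrightarrow> j \<noteq> k \<Longrightarrow> S j \<inter> S k = {}"
    and Sval: "\<And>j. j < K \<Longrightarrow> S j \<subseteq> local_valley P M K j"
    and MS: "\<And>j. j < K \<Longrightarrow> M j \<subseteq> S j"
    using part unfolding metastable_partition_def by blast+
  have IBK: "\<And>j. j \<in> IB \<Longrightarrow> j < K \<and> j \<noteq> i" using IB by auto
  obtain mi where mi: "mi \<in> M i" using Mne[OF i] by blast
  obtain j0 where j0: "j0 \<in> IB" using IB by blast
  obtain b0 where b0: "b0 \<in> M j0" using Mne IBK j0 by blast
  have b0B: "b0 \<in> B" using b0 j0 unfolding B_def by blast
  have disjMB: "M i \<inter> B = {}" unfolding B_def using Mdj[OF i] IBK by blast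
  have UA_eq: "UA = {x \<in> S i. 1 - \<delta> \<le> h x}" unfolding UA_def harm_nbhd_def h_def B_def by simp
  have UB_eq: "UB = {x \<in> (\<Union>j\<in>IB. S j). 1 - \<delta> \<le> eq_pot P B (M i) x}"
    unfolding UB_def harm_nbhd_def B_def by simp
  have compl: "eq_pot P B (M i) x = 1 - h x" for x
    unfolding h_def by (rule eq_pot_compl[OF disjMB, of mi]) (use mi in auto)
  have h1: "h x = 1" if "x \<in> M i" for x using that unfolding h_def eq_pot_def by simp
  have h0: "h x = 0" if "x \<in> B" for x using that disjMB unfolding h_def eq_pot_def by auto
  have MiUA: "M i \<subseteq> UA" using MS[OF i] h1 delta unfolding UA_eq by auto
  have BUB: "B \<subseteq> UB"
  proof
    fix x assume x: "x \<in> B"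
    then obtain j where j: "j \<in> IB" "x \<in> M j" unfolding B_def by blast
    have "x \<in> S j" using MS IBK j by blast
    moreover have "eq_pot P B (M i) x = 1" using x by (simp add: eq_pot_def)
    ultimately show "x \<in> UB" unfolding UB_eq using j delta by auto
  qed
  have UAUB: "UA \<inter> UB = {}"
  proof (rule ccontr)
    assume "UA \<inter> UB \<noteq> {}"
    then obtain x j where "x \<in> S i" "j \<in> IB" "x \<in> S j" unfolding UA_eq UB_eq by blast
    then show False using Sdj[OF i, of j] IBK by blast
  qed
  have miUA: "mi \<in> UA" using mi MiUA by blast
  have b0UB: "b0 \<in> UB" using b0B BUB by blast
  let ?c1 = "cap P \<mu> (M i) B" and ?c2 = "cap P \<mu> UA UB"
  have c2pos: "0 < ?c2" by (rule cap_pos[OF UAUB miUA b0UB])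
  have le1: "?c1 \<le> ?c2"
  proof -
    let ?h2 = "eq_pot P UA UB"
    have "?c1 \<le> Dform P \<mu> ?h2 ?h2"
    proof (rule dirichlet[OF disjMB mi eq_pot_bnd])
      show "?h2 x = 1" if "x \<in> M i" for x using that MiUA by (auto simp: eq_pot_def)
      show "?h2 x = 0" if "x \<in> B" for x using that BUB UAUB by (auto simp: eq_pot_def)
    qed
    also have "Dform P \<mu> ?h2 ?h2 = ?c2"
      by (rule cap_Dform[OF UAUB miUA eq_pot_bnd]) (use UAUB in \<open>auto simp: eq_pot_def\<close>)
    finally show ?thesis .
  qed
  have le2: "(1 - 2 * \<delta>) * ?c2 \<le> ?c1"
  proof -
    define L where "L = 1 / (1 - 2 * \<delta>)"
    have Lpos: "0 < L" unfolding L_def using delta by simp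
    have L1: "(1 - 2 * \<delta>) * L = 1" unfolding L_def using delta by simp
    define f where "f x = clamp01 ((h x - \<delta>) * L)" for x
    have fb: "bnd f" unfolding f_def by (rule bnd_01) (simp add: clamp01_def)
    have f1: "f x = 1" if "x \<in> UA" for x
    proof -
      have "1 - \<delta> \<le> h x" using that unfolding UA_eq by blast
      then have "(1 - 2 * \<delta>) * L \<le> (h x - \<delta>) * L" using Lpos by (intro mult_right_mono) auto
      then have "1 \<le> (h x - \<delta>) * L" using L1 by simp
      then show ?thesis unfolding f_def clamp01_def by simp
    qed
    have f0: "f x = 0" if "x \<in> UB" for x
    proof -
      have "1 - \<delta> \<le> 1 - h x" using that compl unfolding UB_eq by auto
      then have "(h x - \<delta>) * L \<le> 0" using Lpos by (simp add: mult_nonpos_nonneg)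
      then show ?thesis unfolding f_def clamp01_def by simp
    qed
    have "?c2 \<le> Dform P \<mu> f f" by (rule dirichlet[OF UAUB miUA fb f1 f0])
    also have "\<dots> \<le> L * Dform P \<mu> f h"
    proof (rule Dform_cmp[OF fb])
      show "bnd h" unfolding h_def by (rule eq_pot_bnd)
      show "(f a - f b) * (f a - f b) \<le> L * ((f a - f b) * (h a - h b))" for a b
        unfolding f_def L_def by (rule phi_pw[OF delta])
    qed
    also have "Dform P \<mu> f h = ?c1" unfolding h_def
      by (rule cap_Dform[OF disjMB mi fb]) (use f1 f0 MiUA BUB in auto)
    finally have "?c2 \<le> L * ?c1" .
    then have "(1 - 2 * \<delta>) * ?c2 \<le> (1 - 2 * \<delta>) * (L * ?c1)" using delta by (intro mult_left_mono) auto
    then show ?thesis using L1 by (simp add: mult.assoc[symmetric])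
  qed
  have part1: "1 - 2 * \<delta> \<le> ?c1 / ?c2" using le2 c2pos by (simp add: pos_le_divide_eq)
  have part2: "?c1 / ?c2 \<le> 1" using le1 c2pos by simp
  have measnn: "0 \<le> meas \<mu> A" for A unfolding meas_def by (rule infsum_nonneg) (simp add: mu_nonneg)
  have part3: "meas \<mu> (S i - UA) \<le> \<rho> / \<delta> * meas \<mu> (M i)"
  proof (cases "S i - UA = {}")
    case True
    then have "meas \<mu> (S i - UA) = 0" unfolding meas_def by (simp only: infsum_empty)
    moreover have "0 \<le> \<rho> / \<delta> * meas \<mu> (M i)" using measnn[of "M i"] rho delta by simp
    ultimately show ?thesis by simp
  next
    case False
    define X where "X = S i - UA"
    obtain x1 where x1: "x1 \<in> X" using False unfolding X_def by blast
    have X_eq: "X = {x \<in> S i. h x < 1 - \<delta>}" unfolding X_def UA_eq by auto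
    have MiMb: "M i \<subseteq> ?Mb" using i unfolding Mbig_def by blast
    have Xdisj: "X \<inter> ?Mb = {}"
    proof (rule ccontr)
      assume "X \<inter> ?Mb \<noteq> {}"
      then obtain x k where x: "x \<in> X" "k < K" "x \<in> M k" unfolding Mbig_def by blast
      show False
      proof (cases "k = i")
        case True then show False using x h1 delta unfolding X_eq by auto
      next
        case False then show False using x MS[of k] Sdj[OF i x(2)] unfolding X_eq by blast
      qed
    qed
    define R where "R = ?Mb - M i"
    have MiR: "M i \<inter> R = {}" and RMi: "R \<inter> M i = {}" unfolding R_def by blast+
    have MbU: "?Mb = M i \<union> R" unfolding R_def using MiMb by blast
    have BR: "B \<subseteq> R" unfolding R_def B_def Mbig_def using IBK disjMB B_def by blast
    have b0R: "b0 \<in> R" using BR b0B by blast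
    have mi': "mi \<notin> - ?Mb" using mi MiMb by blast
    have mi'': "mi \<notin> - (?Mb \<union> X)" using mi MiMb by blast
    define hi where "hi = eq_pot P (M i) R"
    define g where "g = eq_pot P R (M i)"
    define v where "v = eq_pot P X ?Mb"
    have hi_le: "hi x \<le> h x" for x
    proof (rule cmp_principle[where D="- ?Mb", OF _ _ _ _ mi'])
      show "bnd hi" "bnd h" unfolding hi_def h_def by (rule eq_pot_bnd)+
      show "hi x = Pop P hi x \<and> h x = Pop P h x" if "x \<in> - ?Mb" for x
      proof
        show "hi x = Pop P hi x" unfolding hi_def by (rule eq_pot_harm[OF MiR]) (use that MbU in auto)
        show "h x = Pop P h x" unfolding h_def by (rule eq_pot_harm[OF disjMB]) (use that MbU BR in auto)
      qed
      show "hi x \<le> h x" if "x \<notin> - ?Mb" for x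
      proof (cases "x \<in> M i")
        case True then show ?thesis using h1 by (simp add: hi_def eq_pot_def)
      next
        case False
        then have "hi x = 0" using that MbU by (simp add: hi_def eq_pot_def)
        then show ?thesis using eq_pot_bounds[of "M i" B x] unfolding h_def by simp
      qed
    qed
    have g_eq: "g x = 1 - hi x" for x
      unfolding g_def hi_def by (rule eq_pot_compl[OF MiR, of mi]) (use mi in auto)
    have XnMb: "x \<notin> ?Mb" if "x \<in> X" for x using that Xdisj by blast
    have gX: "\<delta> < g x" if "x \<in> X" for x
      using that hi_le[of x] g_eq[of x] unfolding X_eq by auto
    have dv: "\<delta> * v x \<le> g x" for x
    proof (rule cmp_principle[where D="- (?Mb \<union> X)", OF _ _ _ _ mi''])
      show "bnd (\<lambda>x. \<delta> * v x)" "bnd g" unfolding v_def g_def by (intro bnd_cmult eq_pot_bnd)+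
      show "\<delta> * v x = Pop P (\<lambda>x. \<delta> * v x) x \<and> g x = Pop P g x" if "x \<in> - (?Mb \<union> X)" for x
      proof
        have "v x = Pop P v x" unfolding v_def by (rule eq_pot_harm[OF Xdisj]) (use that in auto)
        then show "\<delta> * v x = Pop P (\<lambda>x. \<delta> * v x) x" by (simp add: Pop_cmult)
        show "g x = Pop P g x" unfolding g_def by (rule eq_pot_harm[OF RMi]) (use that MbU in auto)
      qed
      show "\<delta> * v x \<le> g x" if "x \<notin> - (?Mb \<union> X)" for x
      proof (cases "x \<in> X")
        case True then show ?thesis using gX[of x] by (simp add: v_def eq_pot_def)
      next
        case False
        then have "v x = 0" using that by (simp add: v_def eq_pot_def)
        then show ?thesis using eq_pot_bounds[of R "M i" x] unfolding g_def by simp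
      qed
    qed
    have valley: "1 \<le> real K * hi x" if x: "x \<in> X" for x
    proof -
      have xS: "x \<in> S i" using x unfolding X_eq by blast
      have xMb: "x \<notin> ?Mb" using XnMb[OF x] .
      have ep: "eq_pot P (M j) (?Mb - M j) x = hitprob P (M j) (?Mb - M j) x" if "j < K" for j
        using xMb that unfolding eq_pot_def Mbig_def by auto
      have "1 = (\<Sum>j<K. eq_pot P (M j) (?Mb - M j) x)"
        by (rule valley_sum[symmetric]) (use Mne Mdj K in auto)
      also have "\<dots> \<le> (\<Sum>j<K. hitprob P (M i) (?Mb - M i) x)"
      proof (rule sum_mono)
        fix j assume j: "j \<in> {..<K}"
        show "eq_pot P (M j) (?Mb - M j) x \<le> hitprob P (M i) (?Mb - M i) x"
        proof (cases "j = i")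
          case True then show ?thesis using ep j by simp
        next
          case False
          then show ?thesis using ep[of j] j Sval[OF i] xS unfolding local_valley_def by auto
        qed
      qed
      also have "\<dots> = real K * hi x"
      proof -
        have "x \<notin> M i" using xMb MiMb by blast
        then show ?thesis using xMb unfolding hi_def R_def eq_pot_def by simp
      qed
      finally show ?thesis .
    qed
    have dv2: "v x \<le> real K * hi x" for x
    proof (rule cmp_principle[where D="- (?Mb \<union> X)", OF _ _ _ _ mi''])
      show "bnd v" "bnd (\<lambda>x. real K * hi x)" unfolding v_def hi_def by (intro bnd_cmult eq_pot_bnd)+
      show "v x = Pop P v x \<and> real K * hi x = Pop P (\<lambda>x. real K * hi x) x" if "x \<in> - (?Mb \<union> X)" for x
      proof
        show "v x = Pop P v x" unfolding v_def by (rule eq_pot_harm[OF Xdisj]) (use that in auto)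
        have "hi x = Pop P hi x" unfolding hi_def by (rule eq_pot_harm[OF MiR]) (use that MbU in auto)
        then show "real K * hi x = Pop P (\<lambda>x. real K * hi x) x" by (simp add: Pop_cmult)
      qed
      show "v x \<le> real K * hi x" if "x \<notin> - (?Mb \<union> X)" for x
      proof (cases "x \<in> X")
        case True then show ?thesis using valley[of x] by (simp add: v_def eq_pot_def)
      next
        case False
        then have "v x = 0" using that by (simp add: v_def eq_pot_def)
        then show ?thesis using eq_pot_bounds[of "M i" R x] unfolding hi_def by simp
      qed
    qed
    have hpX: "hitprob P X ?Mb m = Pop P v m" for m unfolding v_def by (rule hitprob_Pop[OF Xdisj])
    have hpR: "hitprob P R (M i) m = Pop P g m" for m unfolding g_def by (rule hitprob_Pop[OF RMi])
    have hpM: "hitprob P (M i) R m = Pop P hi m" for m unfolding hi_def by (rule hitprob_Pop[OF MiR])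
    have vb: "bnd v" "bnd g" "bnd hi" unfolding v_def g_def hi_def by (rule eq_pot_bnd)+
    have ineq1: "hitprob P X ?Mb m \<le> hitprob P R (M i) m / \<delta>" for m
    proof -
      have "\<delta> * Pop P v m = Pop P (\<lambda>x. \<delta> * v x) m" by (simp add: Pop_cmult)
      also have "\<dots> \<le> Pop P g m" by (rule Pop_mono[OF bnd_cmult[OF vb(1)] vb(2) dv])
      finally show ?thesis unfolding hpX hpR using delta by (simp add: pos_le_divide_eq mult.commute)
    qed
    have ineq2: "hitprob P X ?Mb m \<le> real K * hitprob P (M i) R m" for m
    proof -
      have "Pop P v m \<le> Pop P (\<lambda>x. real K * hi x) m" by (rule Pop_mono[OF vb(1) bnd_cmult[OF vb(3)] dv2])
      then show ?thesis unfolding hpX hpM by (simp add: Pop_cmult)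
    qed
    let ?CX = "cap P \<mu> X ?Mb" and ?c = "cap P \<mu> (M i) R"
    have sX: "(\<lambda>m. \<mu> m * hitprob P X ?Mb m) summable_on A" for A by (rule musumm[OF hitprob_bnd])
    have "?CX = (\<Sum>\<^sub>\<infinity>m\<in>?Mb. \<mu> m * hitprob P X ?Mb m)" by (rule cap_sym[OF Xdisj x1])
    also have "\<dots> = (\<Sum>\<^sub>\<infinity>m\<in>M i. \<mu> m * hitprob P X ?Mb m) + (\<Sum>\<^sub>\<infinity>m\<in>R. \<mu> m * hitprob P X ?Mb m)"
    proof -
      have "(\<Sum>\<^sub>\<infinity>m\<in>?Mb. \<mu> m * hitprob P X ?Mb m) = (\<Sum>\<^sub>\<infinity>m\<in>M i \<union> R. \<mu> m * hitprob P X ?Mb m)"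
        using MbU by (rule arg_cong[where f="\<lambda>A. (\<Sum>\<^sub>\<infinity>m\<in>A. \<mu> m * hitprob P X ?Mb m)"])
      then show ?thesis using infsum_Un_disjoint[OF sX sX MiR] by simp
    qed
    also have "(\<Sum>\<^sub>\<infinity>m\<in>M i. \<mu> m * hitprob P X ?Mb m) \<le> (\<Sum>\<^sub>\<infinity>m\<in>M i. (1/\<delta>) * (\<mu> m * hitprob P R (M i) m))"
    proof (rule infsum_mono[OF sX])
      show "(\<lambda>m. (1/\<delta>) * (\<mu> m * hitprob P R (M i) m)) summable_on M i"
        by (intro summable_on_cmult_right musumm hitprob_bnd)
      fix m
      show "\<mu> m * hitprob P X ?Mb m \<le> (1/\<delta>) * (\<mu> m * hitprob P R (M i) m)"
        using mult_left_mono[OF ineq1[of m] mu_nonneg[of m]] by (simp add: field_simps)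
    qed
    also have "(\<Sum>\<^sub>\<infinity>m\<in>M i. (1/\<delta>) * (\<mu> m * hitprob P R (M i) m)) = (1/\<delta>) * ?c"
      unfolding cap_def by (rule infsum_cmult_right')
    also have "(\<Sum>\<^sub>\<infinity>m\<in>R. \<mu> m * hitprob P X ?Mb m) \<le> (\<Sum>\<^sub>\<infinity>m\<in>R. real K * (\<mu> m * hitprob P (M i) R m))"
    proof (rule infsum_mono[OF sX])
      show "(\<lambda>m. real K * (\<mu> m * hitprob P (M i) R m)) summable_on R"
        by (intro summable_on_cmult_right musumm hitprob_bnd)
      fix m
      show "\<mu> m * hitprob P X ?Mb m \<le> real K * (\<mu> m * hitprob P (M i) R m)"
        using mult_left_mono[OF ineq2[of m] mu_nonneg[of m]] by (simp add: field_simps)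
    qed
    also have "(\<Sum>\<^sub>\<infinity>m\<in>R. real K * (\<mu> m * hitprob P (M i) R m)) = real K * ?c"
      unfolding cap_sym[OF MiR mi] by (rule infsum_cmult_right')
    finally have CXle: "?CX \<le> (1/\<delta> + real K) * ?c" by (simp add: algebra_simps)
    have cpos: "0 < ?c" by (rule cap_pos[OF MiR mi b0R])
    have mpos: "0 < meas \<mu> (M i)" by (rule mu_pos_set[OF mi])
    have mXpos: "0 < meas \<mu> X" by (rule mu_pos_set[OF x1])
    have pge: "?c / meas \<mu> (M i) \<le> p_esc P \<mu> M K"
    proof -
      have "hitprob_cond P \<mu> (M i) (?Mb - M i) (M i) \<le> p_esc P \<mu> M K"
        unfolding p_esc_def by (rule Max_ge) (use i in auto)
      then show ?thesis unfolding hitprob_cond_def cap_def R_def .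
    qed
    have cle: "?c \<le> p_esc P \<mu> M K * meas \<mu> (M i)" using pge mpos by (simp add: pos_divide_le_eq)
    have ppos: "0 < p_esc P \<mu> M K" using pge cpos mpos by (meson divide_pos_pos less_le_trans)
    have XMb: "X \<subseteq> - ?Mb" using Xdisj by blast
    have "real K * p_esc P \<mu> M K \<le> \<rho> * hitprob_cond P \<mu> X ?Mb X" by (rule metaA[OF _ XMb]) (use x1 in auto)
    also have "hitprob_cond P \<mu> X ?Mb X = ?CX / meas \<mu> X" unfolding hitprob_cond_def cap_def ..
    finally have "real K * p_esc P \<mu> M K \<le> \<rho> * (?CX / meas \<mu> X)" .
    then have a1: "meas \<mu> X * (real K * p_esc P \<mu> M K) \<le> \<rho> * ?CX"
      using mXpos by (simp add: pos_le_divide_eq mult.commute mult.left_commute)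
    have Kpos: "0 < real K" using K by simp
    have a2: "\<rho> * ?CX \<le> \<rho> * ((1/\<delta> + real K) * (p_esc P \<mu> M K * meas \<mu> (M i)))"
    proof -
      have "(1/\<delta> + real K) * ?c \<le> (1/\<delta> + real K) * (p_esc P \<mu> M K * meas \<mu> (M i))"
        by (rule mult_left_mono[OF cle]) (use delta Kpos in auto)
      with CXle have "?CX \<le> (1/\<delta> + real K) * (p_esc P \<mu> M K * meas \<mu> (M i))" by linarith
      then show ?thesis using rho by (simp add: mult_left_mono)
    qed
    from a1 a2 have "p_esc P \<mu> M K * (meas \<mu> X * real K) \<le> p_esc P \<mu> M K * (\<rho> * (1/\<delta> + real K) * meas \<mu> (M i))"
      by (simp add: algebra_simps)
    then have a3: "meas \<mu> X * real K \<le> \<rho> * (1/\<delta> + real K) * meas \<mu> (M i)"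
      using ppos by simp
    have a4: "\<rho> * (1/\<delta> + real K) * meas \<mu> (M i) \<le> real K * (\<rho> / \<delta> * meas \<mu> (M i))"
    proof -
      have "1 + real K * \<delta> \<le> real K" using K delta
      proof -
        have "real K * \<delta> \<le> real K * (1/2)" using delta Kpos by simp
        then show ?thesis using K by linarith
      qed
      then have "(1 + real K * \<delta>) / \<delta> \<le> real K / \<delta>" using delta by (intro divide_right_mono) auto
      moreover have "1/\<delta> + real K = (1 + real K * \<delta>) / \<delta>" using delta by (simp add: field_simps)
      ultimately have "(1/\<delta> + real K) \<le> real K / \<delta>" by simp
      then have "\<rho> * meas \<mu> (M i) * (1/\<delta> + real K) \<le> \<rho> * meas \<mu> (M i) * (real K / \<delta>)"
        using rho mpos by (intro mult_left_mono) auto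
      then show ?thesis by (simp add: algebra_simps)
    qed
    from a3 a4 have "real K * meas \<mu> X \<le> real K * (\<rho> / \<delta> * meas \<mu> (M i))" by (simp add: mult.commute)
    then have "meas \<mu> X \<le> \<rho> / \<delta> * meas \<mu> (M i)" using Kpos by (rule mult_left_le_imp_le)
    then show ?thesis unfolding X_def .
  qed
  show ?thesis using part1 part2 part3 unfolding B_def UA_def UB_def by simp
qed

end
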